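(* Let $\mathcal{S}$ be either of the calculi $\mathcal{M}'_{2018}$ or $\mathcal{M}'^{-}_{2018}$ defined below. Let $\xi,\zeta$ be stoups, $\Pi,\Gamma_1,\Gamma_2$ finite sequences of tree terms, $A,C$ formulae and $\Xi(\cdot)$ a meta-formula context (all in the language of $\mathcal{S}$). If the sequents $\xi;\Pi\to A$ and $\Xi(\zeta;\Gamma_1,A,\Gamma_2)\to C$ are derivable in $\mathcal{S}$, then the sequent $\Xi(\xi,\zeta;\Gamma_1,\Pi,\Gamma_2)\to C$ is also derivable in $\mathcal{S}$.
   Context: Formulae are built from a countable set of variables and the constant $\mathbf{1}$ by the binary connectives $\backslash$, $/$, $\cdot$, $\wedge$, $\vee$ and the unary connectives $\langle\rangle$, $[]^{-1}$ (bracket modalities) and $!$ (subexponential). A stoup is a finite multiset of formulae ($\varnothing$ is the empty stoup). A tree term is either a formula or an expression $[\Xi]$ with $\Xi$ a meta-formula; a meta-formula is an expression $\zeta;\Gamma$ where $\zeta$ is a stoup and $\Gamma$ is a finite linearly ordered sequence of tree terms (the empty sequence is written $\Lambda$); $\varnothing;\Gamma$ is written simply $\Gamma$. Comma denotes both concatenation of sequences and multiset union of stoups; $\zeta,A$ is $\zeta$ with one more copy of $A$. A sequent is $\Xi\to C$ with $\Xi$ a meta-formula and $C$ a formula. $\Xi(\Theta)$ denotes a meta-formula with a designated occurrence of a meta-formula $\Theta$, which is either $\Xi$ itself or the content of some bracket $[\Theta]$ occurring at any depth in $\Xi$; $\Xi(\Theta')$ is the result of replacing that occurrence by $\Theta'$.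 Below $A,B,C,D,A_1,A_2$ are formulae, $\Gamma,\Delta,\Delta_i,\Gamma_i$ sequences of tree terms, $\zeta,\zeta',\zeta_i$ stoups, $\Xi$ a meta-formula. Common axioms and rules: axioms $A\to A$ and $\Lambda\to\mathbf 1$; ($/L$) from $\zeta_1;\Gamma\to B$ and $\Xi(\zeta_2;\Delta_1,C,\Delta_2)\to D$ infer $\Xi(\zeta_1,\zeta_2;\Delta_1,C/B,\Gamma,\Delta_2)\to D$; ($/R$) from $\zeta;\Gamma,B\to C$ infer $\zeta;\Gamma\to C/B$; ($\backslash L$) from $\zeta_1;\Gamma\to A$ and $\Xi(\zeta_2;\Delta_1,C,\Delta_2)\to D$ infer $\Xi(\zeta_1,\zeta_2;\Delta_1,\Gamma,A\backslash C,\Delta_2)\to D$; ($\backslash R$) from $\zeta;A,\Gamma\to C$ infer $\zeta;\Gamma\to A\backslash C$; ($\cdot L$) from $\Xi(\zeta;\Delta_1,A,B,\Delta_2)\to D$ infer $\Xi(\zeta;\Delta_1,A\cdot B,\Delta_2)\to D$; ($\cdot R$) from $\zeta_1;\Delta\to A$ and $\zeta_2;\Gamma\to B$ infer $\zeta_1,\zeta_2;\Delta,\Gamma\to A\cdot B$; ($\mathbf1 L$) from $\Xi(\zeta;\Delta_1,\Delta_2)\to A$ infer $\Xi(\zeta;\Delta_1,\mathbf1,\Delta_2)\to A$; ($\vee L$) from $\Xi(\zeta;\Delta_1,A_1,\Delta_2)\to C$ and $\Xi(\zeta;\Delta_1,A_2,\Delta_2)\to C$ infer $\Xi(\zeta;\Delta_1,A_1\vee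 A_2,\Delta_2)\to C$; ($\vee R_i$, $i=1,2$) from $\Xi\to A_i$ infer $\Xi\to A_1\vee A_2$; ($\wedge L_i$) from $\Xi(\zeta;\Delta_1,A_i,\Delta_2)\to C$ infer $\Xi(\zeta;\Delta_1,A_1\wedge A_2,\Delta_2)\to C$; ($\wedge R$) from $\Xi\to A_1$ and $\Xi\to A_2$ infer $\Xi\to A_1\wedge A_2$; ($[]^{-1}L$) from $\Xi(\zeta;\Delta_1,A,\Delta_2)\to B$ infer $\Xi(\zeta;\Delta_1,[[]^{-1}A],\Delta_2)\to B$; ($[]^{-1}R$) from $[\Xi]\to A$ infer $\Xi\to []^{-1}A$; ($\langle\rangle L$) from $\Xi(\zeta;\Delta_1,[A],\Delta_2)\to B$ infer $\Xi(\zeta;\Delta_1,\langle\rangle A,\Delta_2)\to B$; ($\langle\rangle R$) from $\Xi\to A$ infer $[\Xi]\to\langle\rangle A$; ($!L$) from $\Xi(\zeta,A;\Gamma_1,\Gamma_2)\to B$ infer $\Xi(\zeta;\Gamma_1,!A,\Gamma_2)\to B$; ($!P$) from $\Xi(\zeta;\Gamma_1,A,\Gamma_2)\to B$ infer $\Xi(\zeta,A;\Gamma_1,\Gamma_2)\to B$. The calculus $\mathcal{M}'_{2018}$ consists of the common axioms and rules together with ($!R'$) from $A;\Lambda\to B$ infer $A;\Lambda\to !B$ (the stoup consists of exactly one formula) and ($!C'$) from $\Xi(\zeta,A;\Gamma_1,[\zeta',A;\Gamma_2],\Gamma_3)\to B$ infer $\Xi(\zeta,A;\Gamma_1,[[\zeta';\Gamma_2]],\Gamma_3)\to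 B$. The calculus $\mathcal{M}'^{-}_{2018}$ (with Lambek's non-emptiness restriction) is $\mathcal{M}'_{2018}$ restricted to formulae not containing $\mathbf1$, without the axiom $\Lambda\to\mathbf1$ and the rule $\mathbf1L$, and with the side conditions: $\backslash R$ and $/R$ may be applied only if $\Gamma\neq\Lambda$ or $\zeta\neq\varnothing$; $!C'$ may be applied only if $\Gamma_2\neq\Lambda$ or $\zeta'\neq\varnothing$. Cut is not a rule of these calculi; "derivable" means derivable by the listed axioms and rules. *)

theory Defs
  imports Main "HOL-Library.Multiset"
begin

text \<open>Formulae. Under A C is A\backslash C; Over C B is C/B; Diam is the bracket
  modality angle-brackets; Box is the inverse bracket modality; Bang is the subexponential.\<close>
datatype frm =
    Var nat
  | One
  | Under frm frm
  | Over frm frm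
  | Prod frm frm
  | Meet frm frm
  | Join frm frm
  | Diam frm
  | Box frm
  | Bang frm

text \<open>Tree terms and meta-formulae (stoup = multiset of formulae, then a sequence of tree terms).\<close>
datatype tree = Frm frm | Br meta
     and meta = Meta "frm multiset" "tree list"

text \<open>Contexts Xi(.): the hole is either the whole meta-formula or the content of a
  bracket at any depth.\<close>
datatype ctx = Hole | CtxIn "frm multiset" "tree list" ctx "tree list"

fun fill :: "ctx \<Rightarrow> meta \<Rightarrow> meta" where
  "fill Hole T = T"
| "fill (CtxIn z G1 c G2) T = Meta z (G1 @ [Br (fill c T)] @ G2)"

fun one_free :: "frm \<Rightarrow> bool" where
  "one_free (Var n) = True"
| "one_free One = False"
| "one_free (Under a b) = (one_free a \<and> one_free b)"
| "one_free (Over a b) = (one_free a \<and> one_free b)"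
| "one_free (Prod a b) = (one_free a \<and> one_free b)"
| "one_free (Meet a b) = (one_free a \<and> one_free b)"
| "one_free (Join a b) = (one_free a \<and> one_free b)"
| "one_free (Diam a) = one_free a"
| "one_free (Box a) = one_free a"
| "one_free (Bang a) = one_free a"

fun one_free_tree :: "tree \<Rightarrow> bool" and one_free_meta :: "meta \<Rightarrow> bool" where
  "one_free_tree (Frm a) = one_free a"
| "one_free_tree (Br m) = one_free_meta m"
| "one_free_meta (Meta z ts) = ((\<forall>a\<in>set_mset z. one_free a) \<and> (\<forall>t\<in>set ts. one_free_tree t))"

text \<open>Side condition: in the restricted calculus (neg = True) every sequent must be 1-free.\<close>
definition ok :: "bool \<Rightarrow> meta \<Rightarrow> frm \<Rightarrow> bool" where
  "ok neg X C = (neg \<longrightarrow> one_free_meta X \<and> one_free C)"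

text \<open>Derivability: neg = False gives M'_2018, neg = True gives M'^-_2018.\<close>
inductive der :: "bool \<Rightarrow> meta \<Rightarrow> frm \<Rightarrow> bool" for neg :: bool where
  ax: "ok neg (Meta {#} [Frm A]) A \<Longrightarrow> der neg (Meta {#} [Frm A]) A"
| oneR: "\<not> neg \<Longrightarrow> der neg (Meta {#} []) One"
| overL: "der neg (Meta z1 G) B \<Longrightarrow> der neg (fill X (Meta z2 (D1 @ [Frm C] @ D2))) D
    \<Longrightarrow> ok neg (fill X (Meta (z1 + z2) (D1 @ [Frm (Over C B)] @ G @ D2))) D
    \<Longrightarrow> der neg (fill X (Meta (z1 + z2) (D1 @ [Frm (Over C B)] @ G @ D2))) D"
| overR: "der neg (Meta z (G @ [Frm B])) C \<Longrightarrow> (neg \<longrightarrow> G \<noteq> [] \<or> z \<noteq> {#})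
    \<Longrightarrow> ok neg (Meta z G) (Over C B) \<Longrightarrow> der neg (Meta z G) (Over C B)"
| underL: "der neg (Meta z1 G) A \<Longrightarrow> der neg (fill X (Meta z2 (D1 @ [Frm C] @ D2))) D
    \<Longrightarrow> ok neg (fill X (Meta (z1 + z2) (D1 @ G @ [Frm (Under A C)] @ D2))) D
    \<Longrightarrow> der neg (fill X (Meta (z1 + z2) (D1 @ G @ [Frm (Under A C)] @ D2))) D"
| underR: "der neg (Meta z (Frm A # G)) C \<Longrightarrow> (neg \<longrightarrow> G \<noteq> [] \<or> z \<noteq> {#})
    \<Longrightarrow> ok neg (Meta z G) (Under A C) \<Longrightarrow> der neg (Meta z G) (Under A C)"
| prodL: "der neg (fill X (Meta z (D1 @ [Frm A, Frm B] @ D2))) D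
    \<Longrightarrow> ok neg (fill X (Meta z (D1 @ [Frm (Prod A B)] @ D2))) D
    \<Longrightarrow> der neg (fill X (Meta z (D1 @ [Frm (Prod A B)] @ D2))) D"
| prodR: "der neg (Meta z1 D) A \<Longrightarrow> der neg (Meta z2 G) B
    \<Longrightarrow> ok neg (Meta (z1 + z2) (D @ G)) (Prod A B)
    \<Longrightarrow> der neg (Meta (z1 + z2) (D @ G)) (Prod A B)"
| oneL: "\<not> neg \<Longrightarrow> der neg (fill X (Meta z (D1 @ D2))) A
    \<Longrightarrow> der neg (fill X (Meta z (D1 @ [Frm One] @ D2))) A"
| joinL: "der neg (fill X (Meta z (D1 @ [Frm A1] @ D2))) C
    \<Longrightarrow> der neg (fill X (Meta z (D1 @ [Frm A2] @ D2))) C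
    \<Longrightarrow> ok neg (fill X (Meta z (D1 @ [Frm (Join A1 A2)] @ D2))) C
    \<Longrightarrow> der neg (fill X (Meta z (D1 @ [Frm (Join A1 A2)] @ D2))) C"
| joinR1: "der neg Y A1 \<Longrightarrow> ok neg Y (Join A1 A2) \<Longrightarrow> der neg Y (Join A1 A2)"
| joinR2: "der neg Y A2 \<Longrightarrow> ok neg Y (Join A1 A2) \<Longrightarrow> der neg Y (Join A1 A2)"
| meetL1: "der neg (fill X (Meta z (D1 @ [Frm A1] @ D2))) C
    \<Longrightarrow> ok neg (fill X (Meta z (D1 @ [Frm (Meet A1 A2)] @ D2))) C
    \<Longrightarrow> der neg (fill X (Meta z (D1 @ [Frm (Meet A1 A2)] @ D2))) C"
| meetL2: "der neg (fill X (Meta z (D1 @ [Frm A2] @ D2))) C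
    \<Longrightarrow> ok neg (fill X (Meta z (D1 @ [Frm (Meet A1 A2)] @ D2))) C
    \<Longrightarrow> der neg (fill X (Meta z (D1 @ [Frm (Meet A1 A2)] @ D2))) C"
| meetR: "der neg Y A1 \<Longrightarrow> der neg Y A2 \<Longrightarrow> ok neg Y (Meet A1 A2)
    \<Longrightarrow> der neg Y (Meet A1 A2)"
| boxL: "der neg (fill X (Meta z (D1 @ [Frm A] @ D2))) B
    \<Longrightarrow> ok neg (fill X (Meta z (D1 @ [Br (Meta {#} [Frm (Box A)])] @ D2))) B
    \<Longrightarrow> der neg (fill X (Meta z (D1 @ [Br (Meta {#} [Frm (Box A)])] @ D2))) B"
| boxR: "der neg (Meta {#} [Br Y]) A \<Longrightarrow> ok neg Y (Box A) \<Longrightarrow> der neg Y (Box A)"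
| diamL: "der neg (fill X (Meta z (D1 @ [Br (Meta {#} [Frm A])] @ D2))) B
    \<Longrightarrow> ok neg (fill X (Meta z (D1 @ [Frm (Diam A)] @ D2))) B
    \<Longrightarrow> der neg (fill X (Meta z (D1 @ [Frm (Diam A)] @ D2))) B"
| diamR: "der neg Y A \<Longrightarrow> ok neg (Meta {#} [Br Y]) (Diam A)
    \<Longrightarrow> der neg (Meta {#} [Br Y]) (Diam A)"
| bangL: "der neg (fill X (Meta (add_mset A z) (G1 @ G2))) B
    \<Longrightarrow> ok neg (fill X (Meta z (G1 @ [Frm (Bang A)] @ G2))) B
    \<Longrightarrow> der neg (fill X (Meta z (G1 @ [Frm (Bang A)] @ G2))) B"
| bangP: "der neg (fill X (Meta z (G1 @ [Frm A] @ G2))) B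
    \<Longrightarrow> ok neg (fill X (Meta (add_mset A z) (G1 @ G2))) B
    \<Longrightarrow> der neg (fill X (Meta (add_mset A z) (G1 @ G2))) B"
| bangR: "der neg (Meta {#A#} []) B \<Longrightarrow> ok neg (Meta {#A#} []) (Bang B)
    \<Longrightarrow> der neg (Meta {#A#} []) (Bang B)"
| bangC: "der neg (fill X (Meta (add_mset A z) (G1 @ [Br (Meta (add_mset A z') G2)] @ G3))) B
    \<Longrightarrow> (neg \<longrightarrow> G2 \<noteq> [] \<or> z' \<noteq> {#})
    \<Longrightarrow> ok neg (fill X (Meta (add_mset A z) (G1 @ [Br (Meta {#} [Br (Meta z' G2)])] @ G3))) B
    \<Longrightarrow> der neg (fill X (Meta (add_mset A z) (G1 @ [Br (Meta {#} [Br (Meta z' G2)])] @ G3))) B"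

end

theory Submission
  imports Defs
begin


datatype ectx = EH "frm multiset" "tree list" "tree list" | EI "frm multiset" "tree list" ectx "tree list"

fun st :: "meta \<Rightarrow> frm multiset" where "st (Meta s ts) = s"
fun tl :: "meta \<Rightarrow> tree list" where "tl (Meta s ts) = ts"

lemma meta_eta[simp]: "Meta (st m) (tl m) = m" by (cases m) auto

fun pl :: "ectx \<Rightarrow> meta \<Rightarrow> meta" where
  "pl (EH z L R) m = Meta (z + st m) (L @ tl m @ R)"
| "pl (EI z L e R) m = Meta z (L @ [Br (pl e m)] @ R)"

fun comp :: "ectx \<Rightarrow> ectx \<Rightarrow> ectx" where
  "comp (EH z L R) (EH z2 L2 R2) = EH (z + z2) (L @ L2) (R2 @ R)"
| "comp (EH z L R) (EI z2 L2 e R2) = EI (z + z2) (L @ L2) e (R2 @ R)"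
| "comp (EI z L e R) K = EI z L (comp e K) R"

lemma pl_comp[simp]: "pl (comp E K) n = pl E (pl K n)"
  by (induction E K rule: comp.induct) (auto simp: ac_simps)

lemma pl_EH0[simp]: "pl (EH {#} [] []) n = n" by simp

fun toE :: "ctx \<Rightarrow> frm multiset \<Rightarrow> tree list \<Rightarrow> tree list \<Rightarrow> ectx" where
  "toE Hole z D1 D2 = EH z D1 D2"
| "toE (CtxIn w L c R) z D1 D2 = EI w L (toE c z D1 D2) R"

lemma pl_toE: "pl (toE X z D1 D2) m = fill X (Meta (z + st m) (D1 @ tl m @ D2))"
  by (induction X) auto

lemma ex_toE: "\<exists>X z D1 D2. E = toE X z D1 D2"
proof (induction E)
  case (EH z L R) then show ?case by (metis toE.simps(1))
next
  case (EI z L e R) then show ?case by (metis toE.simps(2))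
qed

lemma pl_E_fill: obtains X z D1 D2 where "\<And>m. pl E m = fill X (Meta (z + st m) (D1 @ tl m @ D2))"
  using ex_toE[of E] pl_toE by metis

inductive lrule :: "bool \<Rightarrow> meta list \<Rightarrow> (meta \<times> frm) list \<Rightarrow> meta \<Rightarrow> bool" for neg where
  lOverL: "lrule neg [Meta {#} [Frm C]] [(Meta z1 G, B)] (Meta z1 (Frm (Over C B) # G))"
| lUnderL: "lrule neg [Meta {#} [Frm C]] [(Meta z1 G, A)] (Meta z1 (G @ [Frm (Under A C)]))"
| lProdL: "lrule neg [Meta {#} [Frm A, Frm B]] [] (Meta {#} [Frm (Prod A B)])"
| lOneL: "\<not> neg \<Longrightarrow> lrule neg [Meta {#} []] [] (Meta {#} [Frm One])"
| lJoinL: "lrule neg [Meta {#} [Frm A1], Meta {#} [Frm A2]] [] (Meta {#} [Frm (Join A1 A2)])"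
| lMeetL1: "lrule neg [Meta {#} [Frm A1]] [] (Meta {#} [Frm (Meet A1 A2)])"
| lMeetL2: "lrule neg [Meta {#} [Frm A2]] [] (Meta {#} [Frm (Meet A1 A2)])"
| lBoxL: "lrule neg [Meta {#} [Frm A]] [] (Meta {#} [Br (Meta {#} [Frm (Box A)])])"
| lDiamL: "lrule neg [Meta {#} [Br (Meta {#} [Frm A])]] [] (Meta {#} [Frm (Diam A)])"
| lBangL: "lrule neg [Meta {#A#} []] [] (Meta {#} [Frm (Bang A)])"
| lBangP: "lrule neg [Meta {#} [Frm A]] [] (Meta {#A#} [])"
| lBangC: "(neg \<longrightarrow> G2 \<noteq> [] \<or> z' \<noteq> {#}) \<Longrightarrow>
    lrule neg [Meta {#A#} [Br (Meta (add_mset A z') G2)]] [] (Meta {#A#} [Br (Meta {#} [Br (Meta z' G2)])])"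

inductive derE :: "bool \<Rightarrow> meta \<Rightarrow> frm \<Rightarrow> bool" for neg where
  eax: "ok neg (Meta {#} [Frm A]) A \<Longrightarrow> derE neg (Meta {#} [Frm A]) A"
| eoneR: "\<not> neg \<Longrightarrow> derE neg (Meta {#} []) One"
| eL: "lrule neg ms sides m \<Longrightarrow> (\<forall>m'\<in>set ms. derE neg (pl E m') D) \<Longrightarrow> (\<forall>(Y,B)\<in>set sides. derE neg Y B)
    \<Longrightarrow> ok neg (pl E m) D \<Longrightarrow> derE neg (pl E m) D"
| eoverR: "derE neg (Meta z (G @ [Frm B])) C \<Longrightarrow> (neg \<longrightarrow> G \<noteq> [] \<or> z \<noteq> {#})
    \<Longrightarrow> ok neg (Meta z G) (Over C B) \<Longrightarrow> derE neg (Meta z G) (Over C B)"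
| eunderR: "derE neg (Meta z (Frm A # G)) C \<Longrightarrow> (neg \<longrightarrow> G \<noteq> [] \<or> z \<noteq> {#})
    \<Longrightarrow> ok neg (Meta z G) (Under A C) \<Longrightarrow> derE neg (Meta z G) (Under A C)"
| eprodR: "derE neg (Meta z1 D) A \<Longrightarrow> derE neg (Meta z2 G) B
    \<Longrightarrow> ok neg (Meta (z1 + z2) (D @ G)) (Prod A B)
    \<Longrightarrow> derE neg (Meta (z1 + z2) (D @ G)) (Prod A B)"
| ejoinR1: "derE neg Y A1 \<Longrightarrow> ok neg Y (Join A1 A2) \<Longrightarrow> derE neg Y (Join A1 A2)"
| ejoinR2: "derE neg Y A2 \<Longrightarrow> ok neg Y (Join A1 A2) \<Longrightarrow> derE neg Y (Join A1 A2)"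
| emeetR: "derE neg Y A1 \<Longrightarrow> derE neg Y A2 \<Longrightarrow> ok neg Y (Meet A1 A2) \<Longrightarrow> derE neg Y (Meet A1 A2)"
| eboxR: "derE neg (Meta {#} [Br Y]) A \<Longrightarrow> ok neg Y (Box A) \<Longrightarrow> derE neg Y (Box A)"
| ediamR: "derE neg Y A \<Longrightarrow> ok neg (Meta {#} [Br Y]) (Diam A) \<Longrightarrow> derE neg (Meta {#} [Br Y]) (Diam A)"
| ebangR: "derE neg (Meta {#A#} []) B \<Longrightarrow> ok neg (Meta {#A#} []) (Bang B) \<Longrightarrow> derE neg (Meta {#A#} []) (Bang B)"

lemma der_derE: "der neg Y C \<Longrightarrow> derE neg Y C"
proof (induction rule: der.induct)
  case (ax A) then show ?case by (rule eax)
next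
  case oneR then show ?case by (rule eoneR)
next
  case (overL z1 G B X z2 D1 C D2 D)
  have "derE neg (pl (toE X z2 D1 D2) (Meta z1 (Frm (Over C B) # G))) D"
    apply (rule eL[OF lOverL]) using overL by (auto simp: pl_toE ac_simps)
  then show ?case by (simp add: pl_toE ac_simps)
next
  case (overR z G B C) then show ?case by (auto intro: eoverR)
next
  case (underL z1 G A X z2 D1 C D2 D)
  have "derE neg (pl (toE X z2 D1 D2) (Meta z1 (G @ [Frm (Under A C)]))) D"
    apply (rule eL[OF lUnderL]) using underL by (auto simp: pl_toE ac_simps)
  then show ?case by (simp add: pl_toE ac_simps)
next
  case (underR z A G C) then show ?case by (auto intro: eunderR)
next
  case (prodL X z D1 A B D2 D)
  have "derE neg (pl (toE X z D1 D2) (Meta {#} [Frm (Prod A B)])) D"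
    apply (rule eL[OF lProdL]) using prodL by (auto simp: pl_toE ac_simps)
  then show ?case by (simp add: pl_toE ac_simps)
next
  case (prodR z1 D A z2 G B) then show ?case by (auto intro: eprodR)
next
  case (oneL X z D1 D2 A)
  have "derE neg (pl (toE X z D1 D2) (Meta {#} [Frm One])) A"
    apply (rule eL[OF lOneL]) using oneL by (auto simp: pl_toE ac_simps ok_def)
  then show ?case by (simp add: pl_toE ac_simps)
next
  case (joinL X z D1 A1 D2 C A2)
  have "derE neg (pl (toE X z D1 D2) (Meta {#} [Frm (Join A1 A2)])) C"
    apply (rule eL[OF lJoinL]) using joinL by (auto simp: pl_toE ac_simps)
  then show ?case by (simp add: pl_toE ac_simps)
next
  case (joinR1 Y A1 A2) then show ?case by (auto intro: ejoinR1)
next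
  case (joinR2 Y A2 A1) then show ?case by (auto intro: ejoinR2)
next
  case (meetL1 X z D1 A1 D2 C A2)
  have "derE neg (pl (toE X z D1 D2) (Meta {#} [Frm (Meet A1 A2)])) C"
    apply (rule eL[OF lMeetL1]) using meetL1 by (auto simp: pl_toE ac_simps)
  then show ?case by (simp add: pl_toE ac_simps)
next
  case (meetL2 X z D1 A2 D2 C A1)
  have "derE neg (pl (toE X z D1 D2) (Meta {#} [Frm (Meet A1 A2)])) C"
    apply (rule eL[OF lMeetL2]) using meetL2 by (auto simp: pl_toE ac_simps)
  then show ?case by (simp add: pl_toE ac_simps)
next
  case (meetR Y A1 A2) then show ?case by (auto intro: emeetR)
next
  case (boxL X z D1 A D2 B)
  have "derE neg (pl (toE X z D1 D2) (Meta {#} [Br (Meta {#} [Frm (Box A)])])) B"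
    apply (rule eL[OF lBoxL]) using boxL by (auto simp: pl_toE ac_simps)
  then show ?case by (simp add: pl_toE ac_simps)
next
  case (boxR Y A) then show ?case by (auto intro: eboxR)
next
  case (diamL X z D1 A D2 B)
  have "derE neg (pl (toE X z D1 D2) (Meta {#} [Frm (Diam A)])) B"
    apply (rule eL[OF lDiamL]) using diamL by (auto simp: pl_toE ac_simps)
  then show ?case by (simp add: pl_toE ac_simps)
next
  case (diamR Y A) then show ?case by (auto intro: ediamR)
next
  case (bangL X A z G1 G2 B)
  have "derE neg (pl (toE X z G1 G2) (Meta {#} [Frm (Bang A)])) B"
    apply (rule eL[OF lBangL]) using bangL by (auto simp: pl_toE ac_simps)
  then show ?case by (simp add: pl_toE ac_simps)
next
  case (bangP X z G1 A G2 B)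
  have "derE neg (pl (toE X z G1 G2) (Meta {#A#} [])) B"
    apply (rule eL[OF lBangP]) using bangP by (auto simp: pl_toE ac_simps)
  then show ?case by (simp add: pl_toE ac_simps)
next
  case (bangR A B) then show ?case by (auto intro: ebangR)
next
  case (bangC X A z G1 z' G2 G3 B)
  have "derE neg (pl (toE X z G1 G3) (Meta {#A#} [Br (Meta {#} [Br (Meta z' G2)])])) B"
    apply (rule eL[OF lBangC]) using bangC by (auto simp: pl_toE ac_simps)
  then show ?case by (simp add: pl_toE ac_simps)
qed

lemma derE_der: "derE neg Y C \<Longrightarrow> der neg Y C"
proof (induction rule: derE.induct)
  case (eL ms sides m E D)
  obtain X z D1 D2 where PE: "\<And>m. pl E m = fill X (Meta (z + st m) (D1 @ tl m @ D2))"
    using pl_E_fill by blast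
  from eL.hyps(1) eL show ?case
  proof (cases rule: lrule.cases)
    case (lOverL C z1 G B)
    then show ?thesis using eL der.overL[of neg z1 G B X z D1 C D2 D] by (auto simp: PE ac_simps)
  next
    case (lUnderL C z1 G A)
    then show ?thesis using eL der.underL[of neg z1 G A X z D1 C D2 D] by (auto simp: PE ac_simps)
  next
    case (lProdL A B)
    then show ?thesis using eL der.prodL[of neg X z D1 A B D2 D] by (auto simp: PE ac_simps)
  next
    case lOneL
    then show ?thesis using eL der.oneL[of neg X z D1 D2 D] by (auto simp: PE ac_simps)
  next
    case (lJoinL A1 A2)
    then show ?thesis using eL der.joinL[of neg X z D1 A1 D2 D A2] by (auto simp: PE ac_simps)
  next
    case (lMeetL1 A1 A2)
    then show ?thesis using eL der.meetL1[of neg X z D1 A1 D2 D A2] by (auto simp: PE ac_simps)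
  next
    case (lMeetL2 A2 A1)
    then show ?thesis using eL der.meetL2[of neg X z D1 A2 D2 D A1] by (auto simp: PE ac_simps)
  next
    case (lBoxL A)
    then show ?thesis using eL der.boxL[of neg X z D1 A D2 D] by (auto simp: PE ac_simps)
  next
    case (lDiamL A)
    then show ?thesis using eL der.diamL[of neg X z D1 A D2 D] by (auto simp: PE ac_simps)
  next
    case (lBangL A)
    then show ?thesis using eL der.bangL[of neg X A z D1 D2 D] by (auto simp: PE ac_simps)
  next
    case (lBangP A)
    then show ?thesis using eL der.bangP[of neg X z D1 A D2 D] by (auto simp: PE ac_simps)
  next
    case (lBangC G2 z' A)
    then show ?thesis using eL der.bangC[of neg X A z D1 z' G2 D2 D] by (auto simp: PE ac_simps)
  qed
qed (auto intro: der.intros)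



lemma derE_ok: "derE neg Y C \<Longrightarrow> ok neg Y C"
  by (induction rule: derE.induct) (auto simp: ok_def)

lemma of_pl: "one_free_meta (pl K n) = (one_free_meta (pl K (Meta {#} [])) \<and> one_free_meta n)"
  by (induction K) (cases n; auto)+

lemma ok_pl: "ok neg (pl K n0) C \<Longrightarrow> ok neg n A \<Longrightarrow> ok neg (pl K n) C"
  unfolding ok_def using of_pl by metis

fun wft :: "tree \<Rightarrow> bool" and wfm :: "meta \<Rightarrow> bool" where
  "wft (Frm a) = True"
| "wft (Br m) = wfm m"
| "wfm (Meta z ts) = ((z \<noteq> {#} \<or> ts \<noteq> []) \<and> (\<forall>t\<in>set ts. wft t))"

definition nem :: "meta \<Rightarrow> bool" where "nem m = (st m \<noteq> {#} \<or> tl m \<noteq> [])"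

lemma nem_pl: "nem n \<Longrightarrow> nem (pl K n)"
  by (cases K) (auto simp: nem_def)

lemma wf_nem: "wfm m \<Longrightarrow> nem m" by (cases m) (auto simp: nem_def)

lemma wf_pl_sub: "wfm (pl E m) \<Longrightarrow> \<forall>t\<in>set (tl m). wft t"
  by (induction E) auto

lemma wf_pl_repl: "wfm (pl E m) \<Longrightarrow> nem m' \<Longrightarrow> \<forall>t\<in>set (tl m'). wft t \<Longrightarrow> wfm (pl E m')"
  by (induction E) (auto simp: nem_def)

lemma lrule_wf: "lrule neg ms sides m \<Longrightarrow> neg \<Longrightarrow> wfm (pl E (hd ms)) \<Longrightarrow>
   \<forall>(Y,B)\<in>set sides. wfm Y \<Longrightarrow> wfm (pl E m)"
  by (erule lrule.cases; (rule wf_pl_repl[of E "hd ms"]; auto simp: nem_def dest!: wf_pl_sub))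

lemma lrule_ne: "lrule neg ms sides m \<Longrightarrow> ms \<noteq> []"
  by (erule lrule.cases) auto

lemma derE_wf: "derE neg Y C \<Longrightarrow> neg \<Longrightarrow> wfm Y"
proof (induction rule: derE.induct)
  case (eL ms sides m E D)
  have "hd ms \<in> set ms" using lrule_ne[OF eL(1)] by simp
  then have "wfm (pl E (hd ms))" using eL by auto
  moreover have "\<forall>(Y,B)\<in>set sides. wfm Y" using eL by auto
  ultimately show ?case by (rule lrule_wf[OF eL(1) eL(5)])
qed auto

lemma derE_nem: "derE neg Y C \<Longrightarrow> neg \<Longrightarrow> nem Y"
  using derE_wf wf_nem by blast

lemma split2: "ys @ zs = us @ [b] @ vs \<Longrightarrow>
   (\<exists>P Q. ys = P @ [b] @ Q \<and> us = P \<and> vs = Q @ zs) \<or> (\<exists>M. zs = M @ [b] @ vs \<and> us = ys @ M)"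
  by (auto simp: append_eq_append_conv2 Cons_eq_append_conv append_eq_Cons_conv)

lemma split3: "xs @ ys @ zs = us @ [b] @ vs \<Longrightarrow>
   (\<exists>M. xs = us @ [b] @ M \<and> vs = M @ ys @ zs) \<or> (\<exists>P Q. ys = P @ [b] @ Q \<and> us = xs @ P \<and> vs = Q @ zs)
   \<or> (\<exists>M. zs = M @ [b] @ vs \<and> us = xs @ ys @ M)"
proof (induction xs arbitrary: us)
  case Nil
  then show ?case using split2[of ys zs us b vs] by auto
next
  case (Cons x xs)
  show ?case
  proof (cases us)
    case Nil then show ?thesis using Cons.prems by auto
  next
    case (Cons u us')
    with Cons.prems have "u = x" "xs @ ys @ zs = us' @ [b] @ vs" by auto
    from Cons.IH[OF this(2)] show ?thesis using \<open>u = x\<close> Cons by auto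
  qed
qed

lemma split1: "xs @ [a] @ zs = us @ [b] @ vs \<Longrightarrow>
   (\<exists>M. xs = us @ [b] @ M \<and> vs = M @ [a] @ zs) \<or> (xs = us \<and> a = b \<and> vs = zs)
   \<or> (\<exists>M. zs = M @ [b] @ vs \<and> us = xs @ [a] @ M)"
  using split3[of xs "[a]" zs us b vs] by (auto simp: Cons_eq_append_conv)



definition outside :: "ectx \<Rightarrow> meta \<Rightarrow> ectx \<Rightarrow> meta \<Rightarrow> bool" where
  "outside E m K a = (\<exists>F. (\<forall>m'. F m' a = pl E m') \<and> (\<forall>n. F m n = pl K n)
      \<and> (\<forall>n. \<exists>E'. \<forall>m'. F m' n = pl E' m') \<and> (\<forall>m'. \<exists>K'. \<forall>n. F m' n = pl K' n))"

lemma outsideI: "(\<And>m'. F m' a = pl E m') \<Longrightarrow> (\<And>n. F m n = pl K n) \<Longrightarrow>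
   (\<And>n. \<exists>E'. \<forall>m'. F m' n = pl E' m') \<Longrightarrow> (\<And>m'. \<exists>K'. \<forall>n. F m' n = pl K' n) \<Longrightarrow> outside E m K a"
  unfolding outside_def by blast

lemma outside_lift: "outside E m K a \<Longrightarrow> outside (EI z L E R) m (EI z L K R) a"
  unfolding outside_def
proof (elim exE conjE)
  fix F assume F: "\<forall>m'. F m' a = pl E m'" "\<forall>n. F m n = pl K n"
      "\<forall>n. \<exists>E'. \<forall>m'. F m' n = pl E' m'" "\<forall>m'. \<exists>K'. \<forall>n. F m' n = pl K' n"
  show "\<exists>F. (\<forall>m'. F m' a = pl (EI z L E R) m') \<and> (\<forall>n. F m n = pl (EI z L K R) n) \<and>
      (\<forall>n. \<exists>E'. \<forall>m'. F m' n = pl E' m') \<and> (\<forall>m'. \<exists>K'. \<forall>n. F m' n = pl K' n)"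
  proof (intro exI[of _ "\<lambda>m' n. Meta z (L @ [Br (F m' n)] @ R)"] conjI allI)
    fix n
    obtain E' where "\<forall>m'. F m' n = pl E' m'" using F(3) by blast
    then show "\<exists>E'. \<forall>m'. Meta z (L @ [Br (F m' n)] @ R) = pl E' m'" by (intro exI[of _ "EI z L E' R"]) auto
  next
    fix m'
    obtain K' where "\<forall>n. F m' n = pl K' n" using F(4) by blast
    then show "\<exists>K'. \<forall>n. Meta z (L @ [Br (F m' n)] @ R) = pl K' n" by (intro exI[of _ "EI z L K' R"]) auto
  qed (use F in auto)
qed

abbreviation fa :: "frm \<Rightarrow> meta" where "fa A \<equiv> Meta {#} [Frm A]"

lemma two_hole: "pl E m = pl K (fa A) \<Longrightarrow>
  (\<exists>K'. m = pl K' (fa A) \<and> (\<forall>n. pl E (pl K' n) = pl K n)) \<or> outside E m K (fa A)"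
proof (induction E arbitrary: K)
  case (EH z L R)
  show ?case
  proof (cases K)
    case (EH z2 L2 R2)
    with EH.prems have st: "z + st m = z2" and ls: "L @ tl m @ R = L2 @ [Frm A] @ R2" by auto
    from split3[OF ls] show ?thesis
    proof (elim disjE exE conjE)
      fix M assume a: "L = L2 @ [Frm A] @ M" "R2 = M @ tl m @ R"
      show ?thesis apply (rule disjI2)
        apply (rule outsideI[where F="\<lambda>m' n. Meta (z + st m' + st n) (L2 @ tl n @ M @ tl m' @ R)"])
        subgoal using a by (auto simp: ac_simps)
        subgoal using a st EH by (auto simp: ac_simps)
        subgoal for n by (rule exI[of _ "EH (z + st n) (L2 @ tl n @ M) R"]) (auto simp: ac_simps)
        subgoal for m' by (rule exI[of _ "EH (z + st m') L2 (M @ tl m' @ R)"]) (auto simp: ac_simps)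
        done
    next
      fix P Q assume a: "tl m = P @ [Frm A] @ Q" "L2 = L @ P" "R2 = Q @ R"
      show ?thesis apply (rule disjI1)
        apply (rule exI[of _ "EH (st m) P Q"])
        using a st EH by (cases m) (auto simp: ac_simps)
    next
      fix M assume a: "R = M @ [Frm A] @ R2" "L2 = L @ tl m @ M"
      show ?thesis apply (rule disjI2)
        apply (rule outsideI[where F="\<lambda>m' n. Meta (z + st m' + st n) (L @ tl m' @ M @ tl n @ R2)"])
        subgoal using a by (auto simp: ac_simps)
        subgoal using a st EH by (auto simp: ac_simps)
        subgoal for n by (rule exI[of _ "EH (z + st n) L (M @ tl n @ R2)"]) (auto simp: ac_simps)
        subgoal for m' by (rule exI[of _ "EH (z + st m') (L @ tl m' @ M) R2"]) (auto simp: ac_simps)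
        done
    qed
  next
    case (EI z2 L2 K3 R2)
    with EH.prems have st: "z + st m = z2" and ls: "L @ tl m @ R = L2 @ [Br (pl K3 (fa A))] @ R2" by auto
    from split3[OF ls] show ?thesis
    proof (elim disjE exE conjE)
      fix M assume a: "L = L2 @ [Br (pl K3 (fa A))] @ M" "R2 = M @ tl m @ R"
      show ?thesis apply (rule disjI2)
        apply (rule outsideI[where F="\<lambda>m' n. Meta (z + st m') (L2 @ [Br (pl K3 n)] @ M @ tl m' @ R)"])
        subgoal using a by (auto simp: ac_simps)
        subgoal using a st EI by (auto simp: ac_simps)
        subgoal for n by (rule exI[of _ "EH z (L2 @ [Br (pl K3 n)] @ M) R"]) (auto simp: ac_simps)
        subgoal for m' by (rule exI[of _ "EI (z + st m') L2 K3 (M @ tl m' @ R)"]) (auto simp: ac_simps)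
        done
    next
      fix P Q assume a: "tl m = P @ [Br (pl K3 (fa A))] @ Q" "L2 = L @ P" "R2 = Q @ R"
      show ?thesis apply (rule disjI1)
        apply (rule exI[of _ "EI (st m) P K3 Q"])
        using a st EI by (cases m) (auto simp: ac_simps)
    next
      fix M assume a: "R = M @ [Br (pl K3 (fa A))] @ R2" "L2 = L @ tl m @ M"
      show ?thesis apply (rule disjI2)
        apply (rule outsideI[where F="\<lambda>m' n. Meta (z + st m') (L @ tl m' @ M @ [Br (pl K3 n)] @ R2)"])
        subgoal using a by (auto simp: ac_simps)
        subgoal using a st EI by (auto simp: ac_simps)
        subgoal for n by (rule exI[of _ "EH z L (M @ [Br (pl K3 n)] @ R2)"]) (auto simp: ac_simps)
        subgoal for m' by (rule exI[of _ "EI (z + st m') (L @ tl m' @ M) K3 R2"]) (auto simp: ac_simps)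
        done
    qed
  qed
next
  case (EI z L E3 R)
  show ?case
  proof (cases K)
    case (EH z2 L2 R2)
    with EI.prems have st: "z = z2" and ls: "L @ [Br (pl E3 m)] @ R = L2 @ [Frm A] @ R2" by auto
    from split1[OF ls] show ?thesis
    proof (elim disjE exE conjE)
      fix M assume a: "L = L2 @ [Frm A] @ M" "R2 = M @ [Br (pl E3 m)] @ R"
      show ?thesis apply (rule disjI2)
        apply (rule outsideI[where F="\<lambda>m' n. Meta (z + st n) (L2 @ tl n @ M @ [Br (pl E3 m')] @ R)"])
        subgoal using a by (auto simp: ac_simps)
        subgoal using a st EH by (auto simp: ac_simps)
        subgoal for n by (rule exI[of _ "EI (z + st n) (L2 @ tl n @ M) E3 R"]) (auto simp: ac_simps)
        subgoal for m' by (rule exI[of _ "EH z L2 (M @ [Br (pl E3 m')] @ R)"]) (auto simp: ac_simps)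
        done
    next
      assume "Br (pl E3 m) = Frm A" then show ?thesis by simp
    next
      fix M assume a: "R = M @ [Frm A] @ R2" "L2 = L @ [Br (pl E3 m)] @ M"
      show ?thesis apply (rule disjI2)
        apply (rule outsideI[where F="\<lambda>m' n. Meta (z + st n) (L @ [Br (pl E3 m')] @ M @ tl n @ R2)"])
        subgoal using a by (auto simp: ac_simps)
        subgoal using a st EH by (auto simp: ac_simps)
        subgoal for n by (rule exI[of _ "EI (z + st n) L E3 (M @ tl n @ R2)"]) (auto simp: ac_simps)
        subgoal for m' by (rule exI[of _ "EH z (L @ [Br (pl E3 m')] @ M) R2"]) (auto simp: ac_simps)
        done
    qed
  next
    case (EI z2 L2 K3 R2)
    with EI.prems have st: "z = z2" and ls: "L @ [Br (pl E3 m)] @ R = L2 @ [Br (pl K3 (fa A))] @ R2" by auto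
    from split1[OF ls] show ?thesis
    proof (elim disjE exE conjE)
      fix M assume a: "L = L2 @ [Br (pl K3 (fa A))] @ M" "R2 = M @ [Br (pl E3 m)] @ R"
      show ?thesis apply (rule disjI2)
        apply (rule outsideI[where F="\<lambda>m' n. Meta z (L2 @ [Br (pl K3 n)] @ M @ [Br (pl E3 m')] @ R)"])
        subgoal using a by (auto simp: ac_simps)
        subgoal using a st EI by (auto simp: ac_simps)
        subgoal for n by (rule exI[of _ "EI z (L2 @ [Br (pl K3 n)] @ M) E3 R"]) (auto simp: ac_simps)
        subgoal for m' by (rule exI[of _ "EI z L2 K3 (M @ [Br (pl E3 m')] @ R)"]) (auto simp: ac_simps)
        done
    next
      assume a: "L = L2" "Br (pl E3 m) = Br (pl K3 (fa A))" "R2 = R"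
      then have "pl E3 m = pl K3 (fa A)" by simp
      from EI.IH[OF this] show ?thesis
      proof
        assume "\<exists>K'. m = pl K' (fa A) \<and> (\<forall>n. pl E3 (pl K' n) = pl K3 n)"
        then show ?thesis using a st EI by auto
      next
        assume "outside E3 m K3 (fa A)"
        from outside_lift[OF this, of z L R] show ?thesis using a st EI by auto
      qed
    next
      fix M assume a: "R = M @ [Br (pl K3 (fa A))] @ R2" "L2 = L @ [Br (pl E3 m)] @ M"
      show ?thesis apply (rule disjI2)
        apply (rule outsideI[where F="\<lambda>m' n. Meta z (L @ [Br (pl E3 m')] @ M @ [Br (pl K3 n)] @ R2)"])
        subgoal using a by (auto simp: ac_simps)
        subgoal using a st EI by (auto simp: ac_simps)
        subgoal for n by (rule exI[of _ "EI z L E3 (M @ [Br (pl K3 n)] @ R2)"]) (auto simp: ac_simps)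
        subgoal for m' by (rule exI[of _ "EI z (L @ [Br (pl E3 m')] @ M) K3 R2"]) (auto simp: ac_simps)
        done
    qed
  qed
qed



lemma pl_single: "pl K (fa A) = Meta s [Frm f] \<Longrightarrow> K = EH s [] [] \<and> f = A"
  by (cases K) (auto simp: Cons_eq_append_conv append_eq_Cons_conv)

lemma pl_empty: "pl K (fa A) \<noteq> Meta s []"
  by (cases K) auto

lemma pl_Br1: "pl K (fa A) = Meta s [Br Y] \<Longrightarrow> \<exists>K3. K = EI s [] K3 [] \<and> pl K3 (fa A) = Y"
  by (cases K) (auto simp: Cons_eq_append_conv append_eq_Cons_conv)

lemma pl_box: "pl K (fa A) = Meta {#} [Br (Meta {#} [Frm (Box B)])] \<Longrightarrow> K = EI {#} [] (EH {#} [] []) [] \<and> A = Box B"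
  using pl_Br1[of K A "{#}" "Meta {#} [Frm (Box B)]"] pl_single by fastforce

lemma pl_bangC: "pl K (fa A) = Meta s [Br (Meta {#} [Br (Meta z' G2)])] \<Longrightarrow>
   \<exists>K4. K = EI s [] (EI {#} [] K4 []) [] \<and> pl K4 (fa A) = Meta z' G2"
proof -
  assume "pl K (fa A) = Meta s [Br (Meta {#} [Br (Meta z' G2)])]"
  from pl_Br1[OF this] obtain K3 where "K = EI s [] K3 []" "pl K3 (fa A) = Meta {#} [Br (Meta z' G2)]" by blast
  moreover from pl_Br1[OF this(2)] obtain K4 where "K3 = EI {#} [] K4 []" "pl K4 (fa A) = Meta z' G2" by blast
  ultimately show ?thesis by blast
qed

definition consM :: "tree \<Rightarrow> meta \<Rightarrow> meta" where "consM t m = Meta (st m) (t # tl m)"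
definition snocM :: "tree \<Rightarrow> meta \<Rightarrow> meta" where "snocM t m = Meta (st m) (tl m @ [t])"

lemma pl_cons: "pl K (fa A) = Meta s (Frm f # G) \<Longrightarrow> (K = EH s [] G \<and> f = A) \<or>
   (\<exists>K''. pl K'' (fa A) = Meta s G \<and> (\<forall>n. pl K n = consM (Frm f) (pl K'' n)))"
proof (cases K)
  case (EH z L R)
  assume h: "pl K (fa A) = Meta s (Frm f # G)"
  show ?thesis
  proof (cases L)
    case Nil then show ?thesis using h EH by auto
  next
    case (Cons l L')
    then show ?thesis using h EH
      by (intro disjI2 exI[of _ "EH z L' R"]) (auto simp: consM_def)
  qed
next
  case (EI z L K3 R)
  assume h: "pl K (fa A) = Meta s (Frm f # G)"
  show ?thesis
  proof (cases L)
    case Nil then show ?thesis using h EI by auto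
  next
    case (Cons l L')
    then show ?thesis using h EI
      by (intro disjI2 exI[of _ "EI z L' K3 R"]) (auto simp: consM_def)
  qed
qed

lemma pl_snoc: "pl K (fa A) = Meta s (G @ [Frm f]) \<Longrightarrow> (K = EH s G [] \<and> f = A) \<or>
   (\<exists>K''. pl K'' (fa A) = Meta s G \<and> (\<forall>n. pl K n = snocM (Frm f) (pl K'' n)))"
proof (cases K)
  case (EH z L R)
  assume h: "pl K (fa A) = Meta s (G @ [Frm f])"
  show ?thesis
  proof (cases R rule: rev_cases)
    case Nil then show ?thesis using h EH by auto
  next
    case (snoc R' r)
    then show ?thesis using h EH
      by (intro disjI2 exI[of _ "EH z L R'"]) (auto simp: snocM_def)
  qed
next
  case (EI z L K3 R)
  assume h: "pl K (fa A) = Meta s (G @ [Frm f])"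
  show ?thesis
  proof (cases R rule: rev_cases)
    case Nil then show ?thesis using h EI by auto
  next
    case (snoc R' r)
    then show ?thesis using h EI
      by (intro disjI2 exI[of _ "EI z L K3 R'"]) (auto simp: snocM_def)
  qed
qed

lemma pl_prod: "pl K (fa A) = Meta (z1 + z2) (D @ G) \<Longrightarrow>
  (\<exists>K1. pl K1 (fa A) = Meta z1 D \<and> (\<forall>n. pl K n = Meta (st (pl K1 n) + z2) (tl (pl K1 n) @ G))) \<or>
  (\<exists>K2. pl K2 (fa A) = Meta z2 G \<and> (\<forall>n. pl K n = Meta (z1 + st (pl K2 n)) (D @ tl (pl K2 n))))"
proof (cases K)
  case (EH z L R)
  assume h: "pl K (fa A) = Meta (z1 + z2) (D @ G)"
  then have zz: "z = z1 + z2" and ls: "D @ G = L @ [Frm A] @ R" using EH by auto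
  from split2[OF ls] show ?thesis
  proof (elim disjE exE conjE)
    fix P Q assume "D = P @ [Frm A] @ Q" "L = P" "R = Q @ G"
    then show ?thesis using EH zz by (intro disjI1 exI[of _ "EH z1 P Q"]) (auto simp: ac_simps)
  next
    fix M assume "G = M @ [Frm A] @ R" "L = D @ M"
    then show ?thesis using EH zz by (intro disjI2 exI[of _ "EH z2 M R"]) (auto simp: ac_simps)
  qed
next
  case (EI z L K3 R)
  assume h: "pl K (fa A) = Meta (z1 + z2) (D @ G)"
  then have zz: "z = z1 + z2" and ls: "D @ G = L @ [Br (pl K3 (fa A))] @ R" using EI by auto
  from split2[OF ls] show ?thesis
  proof (elim disjE exE conjE)
    fix P Q assume "D = P @ [Br (pl K3 (fa A))] @ Q" "L = P" "R = Q @ G"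
    then show ?thesis using EI zz by (intro disjI1 exI[of _ "EI z1 P K3 Q"]) (auto simp: ac_simps)
  next
    fix M assume "G = M @ [Br (pl K3 (fa A))] @ R" "L = D @ M"
    then show ?thesis using EI zz by (intro disjI2 exI[of _ "EI z2 M K3 R"]) (auto simp: ac_simps)
  qed
qed

lemma addst_ex: "\<exists>K5. \<forall>n. pl K5 n = Meta (add_mset a (st (pl K4 n))) (tl (pl K4 n))"
  by (cases K4) (auto intro: exI[of _ "EH (add_mset a _) _ _"] exI[of _ "EI (add_mset a _) _ _ _"])



lemma commR:
  assumes dY: "derE neg Yc A" and nY: "neg \<Longrightarrow> nem Yc"
  and hOver: "\<And>E z1 G Cc B D. A = Over Cc B \<Longrightarrow> derE neg (Meta z1 G) B \<Longrightarrow> derE neg (pl E (fa Cc)) D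
      \<Longrightarrow> derE neg (pl E (pl (EH z1 [] G) Yc)) D"
  and hUnder: "\<And>E z1 G Aa Cc D. A = Under Aa Cc \<Longrightarrow> derE neg (Meta z1 G) Aa \<Longrightarrow> derE neg (pl E (fa Cc)) D
      \<Longrightarrow> derE neg (pl E (pl (EH z1 G []) Yc)) D"
  and hProd: "\<And>E A1 B1 D. A = Prod A1 B1 \<Longrightarrow> derE neg (pl E (Meta {#} [Frm A1, Frm B1])) D \<Longrightarrow> derE neg (pl E Yc) D"
  and hOne: "\<And>E D. A = One \<Longrightarrow> derE neg (pl E (Meta {#} [])) D \<Longrightarrow> derE neg (pl E Yc) D"
  and hJoin: "\<And>E A1 A2 D. A = Join A1 A2 \<Longrightarrow> derE neg (pl E (fa A1)) D \<Longrightarrow> derE neg (pl E (fa A2)) D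
      \<Longrightarrow> derE neg (pl E Yc) D"
  and hMeet1: "\<And>E A1 A2 D. A = Meet A1 A2 \<Longrightarrow> derE neg (pl E (fa A1)) D \<Longrightarrow> derE neg (pl E Yc) D"
  and hMeet2: "\<And>E A1 A2 D. A = Meet A1 A2 \<Longrightarrow> derE neg (pl E (fa A2)) D \<Longrightarrow> derE neg (pl E Yc) D"
  and hBox: "\<And>E B1 D. A = Box B1 \<Longrightarrow> derE neg (pl E (fa B1)) D \<Longrightarrow> derE neg (pl E (Meta {#} [Br Yc])) D"
  and hDiam: "\<And>E B1 D. A = Diam B1 \<Longrightarrow> derE neg (pl E (Meta {#} [Br (fa B1)])) D \<Longrightarrow> derE neg (pl E Yc) D"
  and hBang: "\<And>E B1 D. A = Bang B1 \<Longrightarrow> derE neg (pl E (Meta {#B1#} [])) D \<Longrightarrow> derE neg (pl E Yc) D"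
  shows "derE neg R C \<Longrightarrow> \<forall>K. R = pl K (fa A) \<longrightarrow> derE neg (pl K Yc) C"
proof (induction rule: derE.induct)
  case (eax A')
  show ?case
  proof (intro allI impI)
    fix K assume "Meta {#} [Frm A'] = pl K (fa A)"
    then have "K = EH {#} [] [] \<and> A' = A" using pl_single[of K A "{#}" A'] by metis
    then show "derE neg (pl K Yc) A'" using dY by simp
  qed
next
  case eoneR then show ?case using pl_empty by metis
next
  case (eL ms sides m E D)
  show ?case
  proof (intro allI impI)
    fix K assume RK: "pl E m = pl K (fa A)"
    have okT: "ok neg (pl K Yc) D" using ok_pl[OF \<open>ok neg (pl E m) D\<close>[unfolded RK] derE_ok[OF dY]] .
    from two_hole[OF RK] show "derE neg (pl K Yc) D"
    proof
      assume "outside E m K (fa A)"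
      then obtain F where F1: "\<forall>m'. F m' (fa A) = pl E m'" and F2: "\<forall>n. F m n = pl K n"
        and F3: "\<forall>n. \<exists>E'. \<forall>m'. F m' n = pl E' m'" and F4: "\<forall>m'. \<exists>K'. \<forall>n. F m' n = pl K' n"
        unfolding outside_def by blast
      obtain E' where E': "\<forall>m'. F m' Yc = pl E' m'" using F3 by blast
      have "\<forall>m'\<in>set ms. derE neg (pl E' m') D"
      proof
        fix m' assume "m' \<in> set ms"
        then have IH: "\<forall>K. pl E m' = pl K (fa A) \<longrightarrow> derE neg (pl K Yc) D" using eL by blast
        obtain K' where K': "\<forall>n. F m' n = pl K' n" using F4 by blast
        have "pl E m' = pl K' (fa A)" using F1 K' by metis
        then have "derE neg (pl K' Yc) D" using IH by blast
        then show "derE neg (pl E' m') D" using K' E' by metis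
      qed
      moreover have "\<forall>(Y,B)\<in>set sides. derE neg Y B" using eL by auto
      moreover have "pl E' m = pl K Yc" using E' F2 by metis
      ultimately show ?thesis using derE.eL[OF eL(1), of E' D] okT by simp
    next
      assume "\<exists>K'. m = pl K' (fa A) \<and> (\<forall>n. pl E (pl K' n) = pl K n)"
      then obtain K' where mK: "m = pl K' (fa A)" and EK: "\<And>n. pl E (pl K' n) = pl K n" by blast
      have msD: "\<forall>m'\<in>set ms. derE neg (pl E m') D" using eL by blast
      have msIH: "\<forall>m'\<in>set ms. \<forall>K. pl E m' = pl K (fa A) \<longrightarrow> derE neg (pl K Yc) D" using eL by blast
      have sD: "\<forall>(Y,B)\<in>set sides. derE neg Y B" using eL by auto
      have sIH: "\<forall>(Y,B)\<in>set sides. \<forall>K. Y = pl K (fa A) \<longrightarrow> derE neg (pl K Yc) B" using eL by auto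
      have goal: "derE neg (pl E (pl K' Yc)) D"
        using eL(1)
      proof (cases rule: lrule.cases)
        case (lOverL C0 z1 G B)
        from pl_cons[OF mK[symmetric, unfolded lOverL]] show ?thesis
        proof
          assume "K' = EH z1 [] G \<and> Over C0 B = A"
          then show ?thesis using hOver[of C0 B z1 G E D] msD sD lOverL by auto
        next
          assume "\<exists>K''. pl K'' (fa A) = Meta z1 G \<and> (\<forall>n. pl K' n = consM (Frm (Over C0 B)) (pl K'' n))"
          then obtain K'' where K1: "pl K'' (fa A) = Meta z1 G" and K2: "\<And>n. pl K' n = consM (Frm (Over C0 B)) (pl K'' n)" by blast
          define Z where "Z = pl K'' Yc"
          have "derE neg Z B" using sIH lOverL K1 Z_def by auto
          then have s2: "\<forall>(Y,B')\<in>set [(Meta (st Z) (tl Z), B)]. derE neg Y B'" by simp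
          have eq: "pl E (pl K' Yc) = pl E (Meta (st Z) (Frm (Over C0 B) # tl Z))" using K2 Z_def by (simp add: consM_def)
          have ok2: "ok neg (pl E (Meta (st Z) (Frm (Over C0 B) # tl Z))) D" using okT by (metis EK eq)
          have "derE neg (pl E (Meta (st Z) (Frm (Over C0 B) # tl Z))) D"
            by (rule derE.eL[OF lrule.lOverL]) (use msD lOverL s2 ok2 in auto)
          then show ?thesis using eq by simp
        qed
      next
        case (lUnderL C0 z1 G A1)
        from pl_snoc[OF mK[symmetric, unfolded lUnderL]] show ?thesis
        proof
          assume "K' = EH z1 G [] \<and> Under A1 C0 = A"
          then show ?thesis using hUnder[of A1 C0 z1 G E D] msD sD lUnderL by auto
        next
          assume "\<exists>K''. pl K'' (fa A) = Meta z1 G \<and> (\<forall>n. pl K' n = snocM (Frm (Under A1 C0)) (pl K'' n))"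
          then obtain K'' where K1: "pl K'' (fa A) = Meta z1 G" and K2: "\<And>n. pl K' n = snocM (Frm (Under A1 C0)) (pl K'' n)" by blast
          define Z where "Z = pl K'' Yc"
          have "derE neg Z A1" using sIH lUnderL K1 Z_def by auto
          then have s2: "\<forall>(Y,B')\<in>set [(Meta (st Z) (tl Z), A1)]. derE neg Y B'" by simp
          have eq: "pl E (pl K' Yc) = pl E (Meta (st Z) (tl Z @ [Frm (Under A1 C0)]))" using K2 Z_def by (simp add: snocM_def)
          have ok2: "ok neg (pl E (Meta (st Z) (tl Z @ [Frm (Under A1 C0)]))) D" using okT by (metis EK eq)
          have "derE neg (pl E (Meta (st Z) (tl Z @ [Frm (Under A1 C0)]))) D"
            by (rule derE.eL[OF lrule.lUnderL]) (use msD lUnderL s2 ok2 in auto)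
          then show ?thesis using eq by simp
        qed
      next
        case (lProdL A1 B1)
        then have "K' = EH {#} [] [] \<and> Prod A1 B1 = A" using pl_single mK by metis
        then show ?thesis using hProd[of A1 B1 E D] msD lProdL by auto
      next
        case lOneL
        then have "K' = EH {#} [] [] \<and> One = A" using pl_single mK by metis
        then show ?thesis using hOne[of E D] msD lOneL by auto
      next
        case (lJoinL A1 A2)
        then have "K' = EH {#} [] [] \<and> Join A1 A2 = A" using pl_single mK by metis
        then show ?thesis using hJoin[of A1 A2 E D] msD lJoinL by auto
      next
        case (lMeetL1 A1 A2)
        then have "K' = EH {#} [] [] \<and> Meet A1 A2 = A" using pl_single mK by metis
        then show ?thesis using hMeet1[of A1 A2 E D] msD lMeetL1 by auto
      next
        case (lMeetL2 A2 A1)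
        then have "K' = EH {#} [] [] \<and> Meet A1 A2 = A" using pl_single mK by metis
        then show ?thesis using hMeet2[of A1 A2 E D] msD lMeetL2 by auto
      next
        case (lBoxL A1)
        then have "K' = EI {#} [] (EH {#} [] []) [] \<and> A = Box A1" using pl_box mK by metis
        then show ?thesis using hBox[of A1 E D] msD lBoxL by auto
      next
        case (lDiamL A1)
        then have "K' = EH {#} [] [] \<and> Diam A1 = A" using pl_single mK by metis
        then show ?thesis using hDiam[of A1 E D] msD lDiamL by auto
      next
        case (lBangL A1)
        then have "K' = EH {#} [] [] \<and> Bang A1 = A" using pl_single mK by metis
        then show ?thesis using hBang[of A1 E D] msD lBangL by auto
      next
        case (lBangP A1)
        then show ?thesis using pl_empty mK by metis
      next
        case (lBangC G2 z' A0)
        then obtain K4 where K4: "K' = EI {#A0#} [] (EI {#} [] K4 []) []" "pl K4 (fa A) = Meta z' G2"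
          using pl_bangC mK by metis
        obtain K5 where K5: "\<And>n. pl K5 n = Meta (add_mset A0 (st (pl K4 n))) (tl (pl K4 n))"
          using addst_ex by metis
        have "pl E (Meta {#A0#} [Br (Meta (add_mset A0 z') G2)]) = pl (comp E (EI {#A0#} [] K5 [])) (fa A)"
          using K5 K4 by simp
        moreover have "\<forall>K. pl E (Meta {#A0#} [Br (Meta (add_mset A0 z') G2)]) = pl K (fa A) \<longrightarrow> derE neg (pl K Yc) D"
          using msIH lBangC by simp
        ultimately have d1: "derE neg (pl (comp E (EI {#A0#} [] K5 [])) Yc) D" by blast
        define Z where "Z = pl K4 Yc"
        have nZ: "neg \<longrightarrow> tl Z \<noteq> [] \<or> st Z \<noteq> {#}" using nem_pl[of Yc K4] nY Z_def by (auto simp: nem_def)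
        have d2: "\<forall>m'\<in>set [Meta {#A0#} [Br (Meta (add_mset A0 (st Z)) (tl Z))]]. derE neg (pl E m') D"
          using d1 K5 Z_def by simp
        have eq: "pl E (pl K' Yc) = pl E (Meta {#A0#} [Br (Meta {#} [Br (Meta (st Z) (tl Z))])])"
          using K4 Z_def by simp
        have ok2: "ok neg (pl E (Meta {#A0#} [Br (Meta {#} [Br (Meta (st Z) (tl Z))])])) D" using okT by (metis EK eq)
        have "derE neg (pl E (Meta {#A0#} [Br (Meta {#} [Br (Meta (st Z) (tl Z))])])) D"
          by (rule derE.eL[OF lrule.lBangC[OF nZ]]) (use d2 ok2 in auto)
        then show ?thesis using eq by simp
      qed
      then show ?thesis using EK by simp
    qed
  qed
next
  case (eoverR z G B C0)
  show ?case
  proof (intro allI impI)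
    fix K assume RK: "Meta z G = pl K (fa A)"
    have okT: "ok neg (pl K Yc) (Over C0 B)" using ok_pl[OF \<open>ok neg (Meta z G) (Over C0 B)\<close>[unfolded RK] derE_ok[OF dY]] .
    have "Meta z (G @ [Frm B]) = pl (comp (EH {#} [] [Frm B]) K) (fa A)" by (simp add: RK[symmetric])
    then have "derE neg (pl (comp (EH {#} [] [Frm B]) K) Yc) C0" using eoverR.IH by blast
    then have d: "derE neg (Meta (st (pl K Yc)) (tl (pl K Yc) @ [Frm B])) C0" by simp
    have "neg \<longrightarrow> tl (pl K Yc) \<noteq> [] \<or> st (pl K Yc) \<noteq> {#}" using nem_pl nY by (auto simp: nem_def)
    from derE.eoverR[OF d this] okT show "derE neg (pl K Yc) (Over C0 B)" by simp
  qed
next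
  case (eunderR z A1 G C0)
  show ?case
  proof (intro allI impI)
    fix K assume RK: "Meta z G = pl K (fa A)"
    have okT: "ok neg (pl K Yc) (Under A1 C0)" using ok_pl[OF \<open>ok neg (Meta z G) (Under A1 C0)\<close>[unfolded RK] derE_ok[OF dY]] .
    have "Meta z (Frm A1 # G) = pl (comp (EH {#} [Frm A1] []) K) (fa A)" by (simp add: RK[symmetric])
    then have "derE neg (pl (comp (EH {#} [Frm A1] []) K) Yc) C0" using eunderR.IH by blast
    then have d: "derE neg (Meta (st (pl K Yc)) (Frm A1 # tl (pl K Yc))) C0" by simp
    have "neg \<longrightarrow> tl (pl K Yc) \<noteq> [] \<or> st (pl K Yc) \<noteq> {#}" using nem_pl nY by (auto simp: nem_def)
    from derE.eunderR[OF d this] okT show "derE neg (pl K Yc) (Under A1 C0)" by simp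
  qed
next
  case (eprodR z1 D0 A1 z2 G B1)
  show ?case
  proof (intro allI impI)
    fix K assume RK: "Meta (z1 + z2) (D0 @ G) = pl K (fa A)"
    have okT: "ok neg (pl K Yc) (Prod A1 B1)" using ok_pl[OF \<open>ok neg (Meta (z1 + z2) (D0 @ G)) (Prod A1 B1)\<close>[unfolded RK] derE_ok[OF dY]] .
    from pl_prod[OF RK[symmetric]] show "derE neg (pl K Yc) (Prod A1 B1)"
    proof (elim disjE exE conjE)
      fix K1 assume a: "pl K1 (fa A) = Meta z1 D0" "\<forall>n. pl K n = Meta (st (pl K1 n) + z2) (tl (pl K1 n) @ G)"
      then have "derE neg (pl K1 Yc) A1" using eprodR.IH(1) by metis
      then have "derE neg (Meta (st (pl K1 Yc)) (tl (pl K1 Yc))) A1" by simp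
      from derE.eprodR[OF this \<open>derE neg (Meta z2 G) B1\<close>] okT a(2) show ?thesis by metis
    next
      fix K2 assume a: "pl K2 (fa A) = Meta z2 G" "\<forall>n. pl K n = Meta (z1 + st (pl K2 n)) (D0 @ tl (pl K2 n))"
      then have "derE neg (pl K2 Yc) B1" using eprodR.IH(2) by metis
      then have "derE neg (Meta (st (pl K2 Yc)) (tl (pl K2 Yc))) B1" by simp
      from derE.eprodR[OF \<open>derE neg (Meta z1 D0) A1\<close> this] okT a(2) show ?thesis by metis
    qed
  qed
next
  case (ejoinR1 Y A1 A2)
  then show ?case using ok_pl derE_ok[OF dY] by (metis derE.ejoinR1)
next
  case (ejoinR2 Y A2 A1)
  then show ?case using ok_pl derE_ok[OF dY] by (metis derE.ejoinR2)
next
  case (emeetR Y A1 A2)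
  then show ?case using ok_pl derE_ok[OF dY] by (metis derE.emeetR)
next
  case (eboxR Y A1)
  show ?case
  proof (intro allI impI)
    fix K assume RK: "Y = pl K (fa A)"
    have okT: "ok neg (pl K Yc) (Box A1)" using ok_pl[OF \<open>ok neg Y (Box A1)\<close>[unfolded RK] derE_ok[OF dY]] .
    have "Meta {#} [Br Y] = pl (EI {#} [] K []) (fa A)" using RK by simp
    then have "derE neg (pl (EI {#} [] K []) Yc) A1" using eboxR.IH by blast
    then show "derE neg (pl K Yc) (Box A1)" using okT derE.eboxR by simp
  qed
next
  case (ediamR Y A1)
  show ?case
  proof (intro allI impI)
    fix K assume RK: "Meta {#} [Br Y] = pl K (fa A)"
    have okT: "ok neg (pl K Yc) (Diam A1)" using ok_pl[OF \<open>ok neg (Meta {#} [Br Y]) (Diam A1)\<close>[unfolded RK] derE_ok[OF dY]] .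
    obtain K3 where K3: "K = EI {#} [] K3 []" "pl K3 (fa A) = Y" using pl_Br1 RK by metis
    then have "derE neg (pl K3 Yc) A1" using ediamR.IH by blast
    then show "derE neg (pl K Yc) (Diam A1)" using okT derE.ediamR K3 by simp
  qed
next
  case (ebangR A0 B) then show ?case using pl_empty by metis
qed



definition repz :: "frm \<Rightarrow> frm \<Rightarrow> frm multiset \<Rightarrow> frm multiset \<Rightarrow> bool" where
  "repz B A0 z z' = (\<exists>w k. z = w + replicate_mset k B \<and> z' = w + replicate_mset k A0)"

declare list_all2_mono[mono]

lemma replicate_mset_plus: "replicate_mset (a + b) x = replicate_mset a x + replicate_mset b x"
  by (induction a) auto

inductive repm :: "frm \<Rightarrow> frm \<Rightarrow> meta \<Rightarrow> meta \<Rightarrow> bool" and rept :: "frm \<Rightarrow> frm \<Rightarrow> tree \<Rightarrow> tree \<Rightarrow> bool"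
  for B A0 where
  rm: "repz B A0 z z' \<Longrightarrow> list_all2 (rept B A0) ts ts' \<Longrightarrow> repm B A0 (Meta z ts) (Meta z' ts')"
| rtF: "rept B A0 (Frm a) (Frm a)"
| rtB: "repm B A0 m m' \<Longrightarrow> rept B A0 (Br m) (Br m')"

inductive repE :: "frm \<Rightarrow> frm \<Rightarrow> ectx \<Rightarrow> ectx \<Rightarrow> bool" for B A0 where
  "repz B A0 z z' \<Longrightarrow> list_all2 (rept B A0) L L' \<Longrightarrow> list_all2 (rept B A0) R R' \<Longrightarrow> repE B A0 (EH z L R) (EH z' L' R')"
| "repz B A0 z z' \<Longrightarrow> list_all2 (rept B A0) L L' \<Longrightarrow> repE B A0 e e' \<Longrightarrow> list_all2 (rept B A0) R R'
    \<Longrightarrow> repE B A0 (EI z L e R) (EI z' L' e' R')"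

lemma repz_refl: "repz B A0 z z"
  unfolding repz_def by (rule exI[of _ z], rule exI[of _ 0]) simp

lemma repz_add: "repz B A0 a a' \<Longrightarrow> repz B A0 b b' \<Longrightarrow> repz B A0 (a + b) (a' + b')"
  unfolding repz_def
proof (elim exE conjE)
  fix w k w2 k2 assume "a = w + replicate_mset k B" "a' = w + replicate_mset k A0"
    "b = w2 + replicate_mset k2 B" "b' = w2 + replicate_mset k2 A0"
  then show "\<exists>w k. a + b = w + replicate_mset k B \<and> a' + b' = w + replicate_mset k A0"
    by (intro exI[of _ "w + w2"] exI[of _ "k + k2"]) (simp add: replicate_mset_plus ac_simps)
qed

lemma repz_split: "repz B A0 (z + s) u \<Longrightarrow> \<exists>zz ss. u = zz + ss \<and> repz B A0 z zz \<and> repz B A0 s ss"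
proof -
  assume "repz B A0 (z + s) u"
  then obtain w k where wk: "z + s = w + replicate_mset k B" "u = w + replicate_mset k A0"
    unfolding repz_def by blast
  define ks where "ks = min k (count s B)"
  define kz where "kz = k - ks"
  have k1: "k = kz + ks" unfolding kz_def ks_def by simp
  have cnt: "k \<le> count z B + count s B"
    using arg_cong[OF wk(1), of "\<lambda>M. count M B"] by simp
  have kz_le: "kz \<le> count z B" using cnt unfolding kz_def ks_def by auto
  have ks_le: "ks \<le> count s B" unfolding ks_def by auto
  have rz: "replicate_mset kz B \<subseteq># z"
    using kz_le by (simp add: subseteq_mset_def count_replicate_mset)
  have rs: "replicate_mset ks B \<subseteq># s"
    using ks_le by (simp add: subseteq_mset_def count_replicate_mset)
  define z0 where "z0 = z - replicate_mset kz B"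
  define s0 where "s0 = s - replicate_mset ks B"
  have z0: "z = z0 + replicate_mset kz B" using rz unfolding z0_def by simp
  have s0: "s = s0 + replicate_mset ks B" using rs unfolding s0_def by simp
  have "z0 + s0 + replicate_mset k B = w + replicate_mset k B"
    using wk(1) z0 s0 k1 by (simp add: replicate_mset_plus ac_simps)
  then have w: "w = z0 + s0" by simp
  show ?thesis
    apply (rule exI[of _ "z0 + replicate_mset kz A0"], rule exI[of _ "s0 + replicate_mset ks A0"])
    using wk(2) w k1 z0 s0 unfolding repz_def by (auto simp: replicate_mset_plus ac_simps)
qed

lemma repz_empty: "repz B A0 {#} u \<Longrightarrow> u = {#}"
  unfolding repz_def by auto

lemma repz_single: "repz B A0 {#A#} u \<Longrightarrow> u = {#A#} \<or> (A = B \<and> u = {#A0#})"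
  unfolding repz_def
proof (elim exE conjE)
  fix w k assume h: "{#A#} = w + replicate_mset k B" "u = w + replicate_mset k A0"
  have "size {#A#} = size w + k" using h(1) by (metis size_replicate_mset size_union)
  then have "k \<le> 1" by simp
  then consider "k = 0" | "k = 1" by linarith
  then show "u = {#A#} \<or> A = B \<and> u = {#A0#}"
  proof cases
    case 1 then show ?thesis using h by simp
  next
    case 2 then have "{#A#} = w + {#B#}" "u = w + {#A0#}" using h by simp_all
    then show ?thesis by (metis add_cancel_right_left single_eq_add_mset union_mset_add_mset_right)
  qed
qed

lemma repz_size: "repz B A0 z z' \<Longrightarrow> size z = size z'"
  unfolding repz_def by auto

lemma repz_of: "repz B A0 z z' \<Longrightarrow> one_free A0 \<Longrightarrow> \<forall>a\<in>#z. one_free a \<Longrightarrow> \<forall>a\<in>#z'. one_free a"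
  unfolding repz_def by (auto split: if_splits)

lemma rep_refl: "rept B A0 t t" "repm B A0 m m"
proof (induction t and m)
  case (Frm x) then show ?case by (rule rtF)
next
  case (Br x) then show ?case by (rule rtB)
next
  case (Meta z ts) then show ?case by (intro rm repz_refl list.rel_refl_strong) auto
qed

lemma list_all2_rept_refl: "list_all2 (rept B A0) L L"
  by (intro list.rel_refl_strong rep_refl)

lemma repE_refl: "repE B A0 E E"
  by (induction E) (auto intro: repE.intros repz_refl list_all2_rept_refl)

lemma repm_Meta: "repm B A0 (Meta z ts) R' \<Longrightarrow> \<exists>z' ts'. R' = Meta z' ts' \<and> repz B A0 z z' \<and> list_all2 (rept B A0) ts ts'"
  by (auto elim: repm.cases)

lemma rept_Frm: "rept B A0 (Frm a) t' \<Longrightarrow> t' = Frm a"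
  by (auto elim: rept.cases)

lemma rept_Br: "rept B A0 (Br m) t' \<Longrightarrow> \<exists>m'. t' = Br m' \<and> repm B A0 m m'"
  by (auto elim: rept.cases)

lemma repm_st_tl: "repm B A0 n n' \<Longrightarrow> repz B A0 (st n) (st n') \<and> list_all2 (rept B A0) (tl n) (tl n')"
  by (auto elim: repm.cases)

lemma rep_pl2: "repE B A0 E E' \<Longrightarrow> repm B A0 n n' \<Longrightarrow> repm B A0 (pl E n) (pl E' n')"
proof (induction rule: repE.induct)
  case (1 z z' L L' R R')
  then show ?case using repm_st_tl[OF 1(4)]
    by (auto intro!: rm repz_add list_all2_appendI)
next
  case (2 z z' L L' e e' R R')
  then show ?case by (auto intro!: rm list_all2_appendI rtB)
qed

lemma la2_split: "list_all2 P (L @ T @ R) xs \<Longrightarrow> \<exists>L' T' R'. xs = L' @ T' @ R' \<and> list_all2 P L L' \<and> list_all2 P T T' \<and> list_all2 P R R'"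
  by (auto simp: list_all2_append1)

lemma rep_pl_dec: "repm B A0 (pl E m) R' \<Longrightarrow>
   \<exists>E' s' ts'. R' = pl E' (Meta s' ts') \<and> repE B A0 E E' \<and> repz B A0 (st m) s' \<and> list_all2 (rept B A0) (tl m) ts'"
proof (induction E arbitrary: R')
  case (EH z L R)
  then obtain u xs where u: "R' = Meta u xs" "repz B A0 (z + st m) u" "list_all2 (rept B A0) (L @ tl m @ R) xs"
    using repm_Meta by fastforce
  from la2_split[OF u(3)] obtain L' T' R2 where x: "xs = L' @ T' @ R2" "list_all2 (rept B A0) L L'"
    "list_all2 (rept B A0) (tl m) T'" "list_all2 (rept B A0) R R2" by blast
  from repz_split[OF u(2)] obtain zz ss where zs: "u = zz + ss" "repz B A0 z zz" "repz B A0 (st m) ss" by blast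
  show ?case
    by (rule exI[of _ "EH zz L' R2"], rule exI[of _ ss], rule exI[of _ T'])
       (use u x zs in \<open>auto intro: repE.intros\<close>)
next
  case (EI z L e R)
  then obtain u xs where u: "R' = Meta u xs" "repz B A0 z u" "list_all2 (rept B A0) (L @ [Br (pl e m)] @ R) xs"
    using repm_Meta by fastforce
  from la2_split[OF u(3)] obtain L' T' R2 where x: "xs = L' @ T' @ R2" "list_all2 (rept B A0) L L'"
    "list_all2 (rept B A0) [Br (pl e m)] T'" "list_all2 (rept B A0) R R2" by blast
  from x(3) obtain t' where t': "T' = [t']" "rept B A0 (Br (pl e m)) t'"
    by (auto simp: list_all2_Cons1)
  from rept_Br[OF t'(2)] obtain m' where m': "t' = Br m'" "repm B A0 (pl e m) m'" by blast
  from EI.IH[OF m'(2)] obtain e' s' ts' where "m' = pl e' (Meta s' ts')" "repE B A0 e e'"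
    "repz B A0 (st m) s'" "list_all2 (rept B A0) (tl m) ts'" by blast
  then show ?case
    by (intro exI[of _ "EI u L' e' R2"] exI[of _ s'] exI[of _ ts']) (use u x t' m' in \<open>auto intro: repE.intros\<close>)
qed

lemma rep_of: "repm B A0 R R' \<Longrightarrow> one_free A0 \<Longrightarrow> one_free_meta R \<Longrightarrow> one_free_meta R'"
  and "rept B A0 t t' \<Longrightarrow> one_free A0 \<Longrightarrow> one_free_tree t \<Longrightarrow> one_free_tree t'"
proof (induction rule: repm_rept.inducts)
  case (rm z z' ts ts')
  have "\<forall>t'\<in>set ts'. one_free_tree t'"
  proof
    fix t' assume "t' \<in> set ts'"
    then obtain i where i: "i < length ts'" "ts' ! i = t'" by (auto simp: in_set_conv_nth)
    have "length ts = length ts'" using rm(2) by (simp add: list_all2_lengthD)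
    then have "ts ! i \<in> set ts" using i by simp
    moreover have "rept B A0 (ts ! i) t' \<and> (one_free A0 \<longrightarrow> one_free_tree (ts ! i) \<longrightarrow> one_free_tree t')"
      using rm(2) i \<open>length ts = length ts'\<close> by (auto simp: list_all2_conv_all_nth)
    ultimately show "one_free_tree t'" using rm by auto
  qed
  then show ?case using repz_of[OF rm(1)] rm by auto
qed auto



lemma ok_rep: "ok neg R C \<Longrightarrow> repm B A0 R R' \<Longrightarrow> (neg \<Longrightarrow> one_free A0) \<Longrightarrow> ok neg R' C"
  unfolding ok_def using rep_of by blast

lemma la2_Frm: "list_all2 (rept B A0) (map Frm fs) ts' \<Longrightarrow> ts' = map Frm fs"
proof (induction fs arbitrary: ts')
  case Nil then show ?case by simp
next
  case (Cons f fs) then show ?case by (auto simp: list_all2_Cons1 dest: rept_Frm)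
qed

lemma la2_len: "list_all2 P xs ys \<Longrightarrow> (xs = []) = (ys = [])"
  by (auto dest: list_all2_lengthD)

lemma repz_emp_iff: "repz B A0 z z' \<Longrightarrow> (z = {#}) = (z' = {#})"
  using repz_size by (metis size_eq_0_iff_empty)

lemma stoup:
  assumes cutB: "\<And>Y K C. derE neg Y B \<Longrightarrow> derE neg (pl K (fa B)) C \<Longrightarrow> derE neg (pl K Y) C"
    and dA: "derE neg (Meta {#A0#} []) B"
  shows "derE neg R C \<Longrightarrow> \<forall>R'. repm B A0 R R' \<longrightarrow> derE neg R' C"
proof (induction rule: derE.induct)
  have ofA: "neg \<Longrightarrow> one_free A0" using derE_ok[OF dA] by (simp add: ok_def)
  {
  case (eax A)
  show ?case
  proof (intro allI impI)
    fix R' assume "repm B A0 (fa A) R'"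
    then have "R' = fa A" using la2_Frm[of B A0 "[A]"] repz_empty by (auto dest!: repm_Meta)
    then show "derE neg R' A" using eax by (auto intro: derE.eax)
  qed
  next
  case eoneR
  then show ?case using repz_empty by (auto dest!: repm_Meta intro: derE.eoneR)
  next
  case (eL ms sides m E D)
  show ?case
  proof (intro allI impI)
    fix R' assume RR: "repm B A0 (pl E m) R'"
    have okR: "ok neg R' D" using ok_rep[OF \<open>ok neg (pl E m) D\<close> RR ofA] .
    from rep_pl_dec[OF RR] obtain E' s' ts' where d: "R' = pl E' (Meta s' ts')" "repE B A0 E E'"
      "repz B A0 (st m) s'" "list_all2 (rept B A0) (tl m) ts'" by blast
    have msIH: "\<forall>m1\<in>set ms. \<forall>m1'. repm B A0 m1 m1' \<longrightarrow> derE neg (pl E' m1') D"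
      using eL rep_pl2[OF d(2)] by blast
    have ms0: "\<forall>m1\<in>set ms. derE neg (pl E' m1) D" using msIH rep_refl(2) by blast
    have sIH: "\<forall>(Y,B')\<in>set sides. \<forall>Y'. repm B A0 Y Y' \<longrightarrow> derE neg Y' B'" using eL by auto
    have sD: "\<forall>(Y,B')\<in>set sides. derE neg Y B'" using eL by auto
    from eL(1) show "derE neg R' D"
    proof (cases rule: lrule.cases)
      case (lOverL C0 z1 G B1)
      from d(4) lOverL obtain G' where G': "ts' = Frm (Over C0 B1) # G'" "list_all2 (rept B A0) G G'"
        by (auto simp: list_all2_Cons1 dest: rept_Frm)
      have "repm B A0 (Meta z1 G) (Meta s' G')" using d(3) G' lOverL by (auto intro: rm)
      then have "derE neg (Meta s' G') B1" using sIH lOverL by auto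
      then have "derE neg (pl E' (Meta s' (Frm (Over C0 B1) # G'))) D"
        by (intro derE.eL[OF lrule.lOverL]) (use ms0 lOverL okR d G' in auto)
      then show ?thesis using d G' by simp
    next
      case (lUnderL C0 z1 G A1)
      from d(4) lUnderL obtain G' x where G': "ts' = G' @ [x]" "list_all2 (rept B A0) G G'" "rept B A0 (Frm (Under A1 C0)) x"
        by (auto simp: list_all2_append1 list_all2_Cons1)
      then have x: "x = Frm (Under A1 C0)" by (auto dest: rept_Frm)
      have "repm B A0 (Meta z1 G) (Meta s' G')" using d(3) G' lUnderL by (auto intro: rm)
      then have "derE neg (Meta s' G') A1" using sIH lUnderL by auto
      then have "derE neg (pl E' (Meta s' (G' @ [Frm (Under A1 C0)]))) D"
        by (intro derE.eL[OF lrule.lUnderL]) (use ms0 lUnderL okR d G' x in auto)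
      then show ?thesis using d G' x by simp
    next
      case (lProdL A1 B1)
      then have "Meta s' ts' = m" using d(3,4) la2_Frm[of B A0 "[Prod A1 B1]"] repz_empty by auto
      then show ?thesis using derE.eL[OF eL(1), of E' D] ms0 okR d sD sIH eL by auto
    next
      case lOneL
      then have "Meta s' ts' = m" using d(3,4) la2_Frm[of B A0 "[One]"] repz_empty by auto
      then show ?thesis using derE.eL[OF eL(1), of E' D] ms0 okR d sD eL by auto
    next
      case (lJoinL A1 A2)
      then have "Meta s' ts' = m" using d(3,4) la2_Frm[of B A0 "[Join A1 A2]"] repz_empty by auto
      then show ?thesis using derE.eL[OF eL(1), of E' D] ms0 okR d sD eL by auto
    next
      case (lMeetL1 A1 A2)
      then have "Meta s' ts' = m" using d(3,4) la2_Frm[of B A0 "[Meet A1 A2]"] repz_empty by auto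
      then show ?thesis using derE.eL[OF eL(1), of E' D] ms0 okR d sD eL by auto
    next
      case (lMeetL2 A2 A1)
      then have "Meta s' ts' = m" using d(3,4) la2_Frm[of B A0 "[Meet A1 A2]"] repz_empty by auto
      then show ?thesis using derE.eL[OF eL(1), of E' D] ms0 okR d sD eL by auto
    next
      case (lBoxL A1)
      from d(4) lBoxL obtain x where x: "ts' = [x]" "rept B A0 (Br (fa (Box A1))) x"
        by (auto simp: list_all2_Cons1)
      then obtain m' where "x = Br m'" "repm B A0 (fa (Box A1)) m'" using rept_Br by blast
      then have "m' = fa (Box A1)" using la2_Frm[of B A0 "[Box A1]"] repz_empty by (auto dest!: repm_Meta)
      then have "Meta s' ts' = m" using d(3) x \<open>x = Br m'\<close> lBoxL repz_empty by auto
      then show ?thesis using derE.eL[OF eL(1), of E' D] ms0 okR d sD eL by auto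
    next
      case (lDiamL A1)
      then have "Meta s' ts' = m" using d(3,4) la2_Frm[of B A0 "[Diam A1]"] repz_empty by auto
      then show ?thesis using derE.eL[OF eL(1), of E' D] ms0 okR d sD eL by auto
    next
      case (lBangL A1)
      then have "Meta s' ts' = m" using d(3,4) la2_Frm[of B A0 "[Bang A1]"] repz_empty by auto
      then show ?thesis using derE.eL[OF eL(1), of E' D] ms0 okR d sD eL by auto
    next
      case (lBangP A1)
      then have ts: "ts' = []" using d(4) by simp
      from repz_single[of B A0 A1 s'] d(3) lBangP
      consider "s' = {#A1#}" | "A1 = B" "s' = {#A0#}" by auto
      then show ?thesis
      proof cases
        case 1
        then have "Meta s' ts' = m" using ts lBangP by simp
        then show ?thesis using derE.eL[OF eL(1), of E' D] ms0 okR d sD eL by auto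
      next
        case 2
        have "derE neg (pl E' (fa B)) D" using ms0 lBangP 2 by simp
        from cutB[OF dA this] show ?thesis using d ts 2 by simp
      qed
    next
      case (lBangC G2 z' A1)
      from d(4) lBangC obtain x where x: "ts' = [x]" "rept B A0 (Br (Meta {#} [Br (Meta z' G2)])) x"
        by (auto simp: list_all2_Cons1)
      then obtain m1 where m1: "x = Br m1" "repm B A0 (Meta {#} [Br (Meta z' G2)]) m1" using rept_Br by blast
      then obtain u y where uy: "m1 = Meta u y" "repz B A0 {#} u" "list_all2 (rept B A0) [Br (Meta z' G2)] y"
        using repm_Meta by blast
      then obtain y1 where y1: "y = [y1]" "rept B A0 (Br (Meta z' G2)) y1" by (auto simp: list_all2_Cons1)
      then obtain m2 where m2: "y1 = Br m2" "repm B A0 (Meta z' G2) m2" using rept_Br by blast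
      then obtain z'' G2' where zg: "m2 = Meta z'' G2'" "repz B A0 z' z''" "list_all2 (rept B A0) G2 G2'"
        using repm_Meta by blast
      from repz_single[of B A0 A1 s'] d(3) lBangC obtain a' where a': "s' = {#a'#}" "repz B A0 {#A1#} {#a'#}"
        by auto
      have R'eq: "R' = pl E' (Meta {#a'#} [Br (Meta {#} [Br (Meta z'' G2')])])"
        using d(1) a' x m1 uy y1 m2 zg repz_empty by auto
      have "repm B A0 (Meta {#A1#} [Br (Meta (add_mset A1 z') G2)]) (Meta {#a'#} [Br (Meta (add_mset a' z'') G2')])"
        using repz_add[OF a'(2) zg(2)] zg(3) a'(2) by (auto intro!: rm rtB)
      then have p: "derE neg (pl E' (Meta {#a'#} [Br (Meta (add_mset a' z'') G2')])) D" using msIH lBangC by auto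
      have sc: "neg \<longrightarrow> G2' \<noteq> [] \<or> z'' \<noteq> {#}" using lBangC la2_len[OF zg(3)] repz_emp_iff[OF zg(2)] by auto
      show ?thesis unfolding R'eq
        by (rule derE.eL[OF lrule.lBangC[OF sc]]) (use p okR R'eq in auto)
    qed
  qed
  next
  case (eoverR z G B1 C0)
  show ?case
  proof (intro allI impI)
    fix R' assume RR: "repm B A0 (Meta z G) R'"
    have okR: "ok neg R' (Over C0 B1)" using ok_rep[OF \<open>ok neg (Meta z G) (Over C0 B1)\<close> RR ofA] .
    from repm_Meta[OF RR] obtain z' G' where zg: "R' = Meta z' G'" "repz B A0 z z'" "list_all2 (rept B A0) G G'" by blast
    have "repm B A0 (Meta z (G @ [Frm B1])) (Meta z' (G' @ [Frm B1]))"
      using zg by (auto intro!: rm list_all2_appendI rtF)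
    then have "derE neg (Meta z' (G' @ [Frm B1])) C0" using eoverR.IH by blast
    moreover have "neg \<longrightarrow> G' \<noteq> [] \<or> z' \<noteq> {#}" using eoverR la2_len[OF zg(3)] repz_emp_iff[OF zg(2)] by auto
    ultimately show "derE neg R' (Over C0 B1)" using okR zg derE.eoverR by auto
  qed
  next
  case (eunderR z A1 G C0)
  show ?case
  proof (intro allI impI)
    fix R' assume RR: "repm B A0 (Meta z G) R'"
    have okR: "ok neg R' (Under A1 C0)" using ok_rep[OF \<open>ok neg (Meta z G) (Under A1 C0)\<close> RR ofA] .
    from repm_Meta[OF RR] obtain z' G' where zg: "R' = Meta z' G'" "repz B A0 z z'" "list_all2 (rept B A0) G G'" by blast
    have "repm B A0 (Meta z (Frm A1 # G)) (Meta z' (Frm A1 # G'))"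
      using zg by (auto intro!: rm rtF)
    then have "derE neg (Meta z' (Frm A1 # G')) C0" using eunderR.IH by blast
    moreover have "neg \<longrightarrow> G' \<noteq> [] \<or> z' \<noteq> {#}" using eunderR la2_len[OF zg(3)] repz_emp_iff[OF zg(2)] by auto
    ultimately show "derE neg R' (Under A1 C0)" using okR zg derE.eunderR by auto
  qed
  next
  case (eprodR z1 D0 A1 z2 G B1)
  show ?case
  proof (intro allI impI)
    fix R' assume RR: "repm B A0 (Meta (z1 + z2) (D0 @ G)) R'"
    have okR: "ok neg R' (Prod A1 B1)" using ok_rep[OF \<open>ok neg (Meta (z1 + z2) (D0 @ G)) (Prod A1 B1)\<close> RR ofA] .
    from repm_Meta[OF RR] obtain u xs where zg: "R' = Meta u xs" "repz B A0 (z1 + z2) u" "list_all2 (rept B A0) (D0 @ G) xs" by blast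
    from zg(3) obtain D' G' where dg: "xs = D' @ G'" "list_all2 (rept B A0) D0 D'" "list_all2 (rept B A0) G G'"
      by (auto simp: list_all2_append1)
    from repz_split[OF zg(2)] obtain zz ss where zs: "u = zz + ss" "repz B A0 z1 zz" "repz B A0 z2 ss" by blast
    have "derE neg (Meta zz D') A1" using eprodR.IH(1) zs dg by (auto intro: rm)
    moreover have "derE neg (Meta ss G') B1" using eprodR.IH(2) zs dg by (auto intro: rm)
    ultimately show "derE neg R' (Prod A1 B1)" using okR zg zs dg derE.eprodR by auto
  qed
  next
  case (ejoinR1 Y A1 A2)
  then show ?case using ok_rep ofA derE.ejoinR1 by metis
  next
  case (ejoinR2 Y A2 A1)
  then show ?case using ok_rep ofA derE.ejoinR2 by metis
  next
  case (emeetR Y A1 A2)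
  then show ?case using ok_rep ofA derE.emeetR by metis
  next
  case (eboxR Y A1)
  show ?case
  proof (intro allI impI)
    fix R' assume RR: "repm B A0 Y R'"
    have okR: "ok neg R' (Box A1)" using ok_rep[OF \<open>ok neg Y (Box A1)\<close> RR ofA] .
    have "repm B A0 (Meta {#} [Br Y]) (Meta {#} [Br R'])" using RR by (auto intro!: rm rtB repz_refl)
    then have "derE neg (Meta {#} [Br R']) A1" using eboxR.IH by blast
    then show "derE neg R' (Box A1)" using okR derE.eboxR by auto
  qed
  next
  case (ediamR Y A1)
  show ?case
  proof (intro allI impI)
    fix R' assume RR: "repm B A0 (Meta {#} [Br Y]) R'"
    have okR: "ok neg R' (Diam A1)" using ok_rep[OF \<open>ok neg (Meta {#} [Br Y]) (Diam A1)\<close> RR ofA] .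
    from repm_Meta[OF RR] obtain u xs where zg: "R' = Meta u xs" "repz B A0 {#} u" "list_all2 (rept B A0) [Br Y] xs" by blast
    then obtain x where "xs = [x]" "rept B A0 (Br Y) x" by (auto simp: list_all2_Cons1)
    then obtain Y' where Y': "xs = [Br Y']" "repm B A0 Y Y'" using rept_Br by blast
    then have "derE neg Y' A1" using ediamR.IH by blast
    moreover have "u = {#}" using zg(2) repz_empty by blast
    ultimately show "derE neg R' (Diam A1)" using okR derE.ediamR zg Y' by auto
  qed
  next
  case (ebangR A1 B1)
  show ?case
  proof (intro allI impI)
    fix R' assume RR: "repm B A0 (Meta {#A1#} []) R'"
    have okR: "ok neg R' (Bang B1)" using ok_rep[OF \<open>ok neg (Meta {#A1#} []) (Bang B1)\<close> RR ofA] .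
    from repm_Meta[OF RR] obtain u xs where zg: "R' = Meta u xs" "repz B A0 {#A1#} u" "list_all2 (rept B A0) [] xs" by blast
    then have xs: "xs = []" by simp
    from repz_single[OF zg(2)] obtain a' where a': "u = {#a'#}" by auto
    have "derE neg (Meta {#a'#} []) B1" using ebangR.IH RR zg xs a' by auto
    then show "derE neg R' (Bang B1)" using okR derE.ebangR zg xs a' by auto
  qed
  }
qed



lemma cutA:
  assumes IHf: "\<And>B Y K C. size B < size A \<Longrightarrow> derE neg Y B \<Longrightarrow> derE neg (pl K (fa B)) C \<Longrightarrow> derE neg (pl K Y) C"
  shows "derE neg Y A' \<Longrightarrow> A' = A \<longrightarrow> (\<forall>K C. derE neg (pl K (fa A)) C \<longrightarrow> derE neg (pl K Y) C)"
proof (induction rule: derE.induct)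
  case (eax A1)
  then show ?case by simp
next
  case eoneR
  show ?case
  proof (intro impI allI)
    fix K C assume AA: "One = A" and dR: "derE neg (pl K (fa A)) C"
    have dY: "derE neg (Meta {#} []) A" unfolding AA[symmetric] by (rule derE.eoneR[OF \<open>\<not> neg\<close>])
    have nY: "neg \<Longrightarrow> nem (Meta {#} [])" using eoneR by simp
    have h: "\<And>E D. A = One \<Longrightarrow> derE neg (pl E (Meta {#} [])) D \<Longrightarrow> derE neg (pl E (Meta {#} [])) D" by simp
    have "\<forall>K'. pl K (fa A) = pl K' (fa A) \<longrightarrow> derE neg (pl K' (Meta {#} [])) C"
      by (rule commR[OF dY nY _ _ _ h]; (rule dR)?; (simp add: AA[symmetric]; fail)?)
    then show "derE neg (pl K (Meta {#} [])) C" by blast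
  qed
next
  case (eL ms sides m E D)
  show ?case
  proof (intro impI allI)
    fix K C assume AA: "D = A" and dR: "derE neg (pl K (fa A)) C"
    have "\<forall>m'\<in>set ms. derE neg (pl (comp K E) m') C" using eL AA dR by auto
    moreover have "\<forall>(Y,B)\<in>set sides. derE neg Y B" using eL by auto
    moreover have "ok neg (pl (comp K E) m) C"
      using ok_pl[OF derE_ok[OF dR] \<open>ok neg (pl E m) D\<close>] by simp
    ultimately have "derE neg (pl (comp K E) m) C" by (rule derE.eL[OF eL(1)])
    then show "derE neg (pl K (pl E m)) C" by simp
  qed
next
  case (eoverR z G B C0)
  show ?case
  proof (intro impI allI)
    fix K C assume AA: "Over C0 B = A" and dR: "derE neg (pl K (fa A)) C"
    have dY: "derE neg (Meta z G) A" unfolding AA[symmetric]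
      by (rule derE.eoverR[OF \<open>derE neg (Meta z (G @ [Frm B])) C0\<close> \<open>neg \<longrightarrow> G \<noteq> [] \<or> z \<noteq> {#}\<close> \<open>ok neg (Meta z G) (Over C0 B)\<close>])
    have nY: "neg \<Longrightarrow> nem (Meta z G)" using derE_nem[OF dY] .
    have h: "derE neg (pl E (pl (EH z1 [] G1) (Meta z G))) D"
      if "A = Over Cc B'" "derE neg (Meta z1 G1) B'" "derE neg (pl E (fa Cc)) D" for E z1 G1 Cc B' D
    proof -
      have eq: "Cc = C0" "B' = B" using that AA by auto
      have "derE neg (pl E (Meta z (G @ [Frm B]))) D"
        using IHf[of C0 "Meta z (G @ [Frm B])" E D] \<open>derE neg (Meta z (G @ [Frm B])) C0\<close> that(3) eq AA by auto
      then have "derE neg (pl (comp E (EH z G [])) (fa B)) D" by simp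
      from IHf[OF _ that(2)[unfolded eq] this] AA
      have "derE neg (pl (comp E (EH z G [])) (Meta z1 G1)) D" by auto
      then show ?thesis by (simp add: ac_simps)
    qed
    have "\<forall>K'. pl K (fa A) = pl K' (fa A) \<longrightarrow> derE neg (pl K' (Meta z G)) C"
      by (rule commR[OF dY nY h]; (rule dR)?; (simp add: AA[symmetric]; fail)?)
    then show "derE neg (pl K (Meta z G)) C" by blast
  qed
next
  case (eunderR z A1 G C0)
  show ?case
  proof (intro impI allI)
    fix K C assume AA: "Under A1 C0 = A" and dR: "derE neg (pl K (fa A)) C"
    have dY: "derE neg (Meta z G) A" unfolding AA[symmetric]
      by (rule derE.eunderR[OF \<open>derE neg (Meta z (Frm A1 # G)) C0\<close> \<open>neg \<longrightarrow> G \<noteq> [] \<or> z \<noteq> {#}\<close> \<open>ok neg (Meta z G) (Under A1 C0)\<close>])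
    have nY: "neg \<Longrightarrow> nem (Meta z G)" using derE_nem[OF dY] .
    have h: "derE neg (pl E (pl (EH z1 G1 []) (Meta z G))) D"
      if "A = Under Aa Cc" "derE neg (Meta z1 G1) Aa" "derE neg (pl E (fa Cc)) D" for E z1 G1 Aa Cc D
    proof -
      have eq: "Cc = C0" "Aa = A1" using that AA by auto
      have "derE neg (pl E (Meta z (Frm A1 # G))) D"
        using IHf[of C0 "Meta z (Frm A1 # G)" E D] \<open>derE neg (Meta z (Frm A1 # G)) C0\<close> that(3) eq AA by auto
      then have "derE neg (pl (comp E (EH z [] G)) (fa A1)) D" by simp
      from IHf[OF _ that(2)[unfolded eq] this] AA
      have "derE neg (pl (comp E (EH z [] G)) (Meta z1 G1)) D" by auto
      then show ?thesis by (simp add: ac_simps)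
    qed
    have "\<forall>K'. pl K (fa A) = pl K' (fa A) \<longrightarrow> derE neg (pl K' (Meta z G)) C"
      by (rule commR[OF dY nY _ h]; (rule dR)?; (simp add: AA[symmetric]; fail)?)
    then show "derE neg (pl K (Meta z G)) C" by blast
  qed
next
  case (eprodR z1 D0 A1 z2 G B1)
  show ?case
  proof (intro impI allI)
    fix K C assume AA: "Prod A1 B1 = A" and dR: "derE neg (pl K (fa A)) C"
    have dY: "derE neg (Meta (z1 + z2) (D0 @ G)) A" unfolding AA[symmetric]
      by (rule derE.eprodR[OF \<open>derE neg (Meta z1 D0) A1\<close> \<open>derE neg (Meta z2 G) B1\<close> \<open>ok neg (Meta (z1 + z2) (D0 @ G)) (Prod A1 B1)\<close>])
    have nY: "neg \<Longrightarrow> nem (Meta (z1 + z2) (D0 @ G))" using derE_nem[OF dY] .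
    have h: "derE neg (pl E (Meta (z1 + z2) (D0 @ G))) D"
      if "A = Prod A1' B1'" "derE neg (pl E (Meta {#} [Frm A1', Frm B1'])) D" for E A1' B1' D
    proof -
      have eq: "A1' = A1" "B1' = B1" using that AA by auto
      have "derE neg (pl (comp E (EH {#} [] [Frm B1])) (fa A1)) D" using that eq by simp
      from IHf[OF _ \<open>derE neg (Meta z1 D0) A1\<close> this] AA
      have "derE neg (pl E (Meta z1 (D0 @ [Frm B1]))) D" by auto
      then have "derE neg (pl (comp E (EH z1 D0 [])) (fa B1)) D" by simp
      from IHf[OF _ \<open>derE neg (Meta z2 G) B1\<close> this] AA
      show ?thesis by auto
    qed
    have "\<forall>K'. pl K (fa A) = pl K' (fa A) \<longrightarrow> derE neg (pl K' (Meta (z1 + z2) (D0 @ G))) C"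
      by (rule commR[OF dY nY _ _ h]; (rule dR)?; (simp add: AA[symmetric]; fail)?)
    then show "derE neg (pl K (Meta (z1 + z2) (D0 @ G))) C" by blast
  qed
next
  case (ejoinR1 Y A1 A2)
  show ?case
  proof (intro impI allI)
    fix K C assume AA: "Join A1 A2 = A" and dR: "derE neg (pl K (fa A)) C"
    have dY: "derE neg Y A" unfolding AA[symmetric] by (rule derE.ejoinR1[OF \<open>derE neg Y A1\<close> \<open>ok neg Y (Join A1 A2)\<close>])
    have nY: "neg \<Longrightarrow> nem Y" using derE_nem[OF dY] .
    have h: "derE neg (pl E Y) D"
      if "A = Join A1' A2'" "derE neg (pl E (fa A1')) D" "derE neg (pl E (fa A2')) D" for E A1' A2' D
      using IHf[OF _ \<open>derE neg Y A1\<close>, of E D] that AA by auto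
    have "\<forall>K'. pl K (fa A) = pl K' (fa A) \<longrightarrow> derE neg (pl K' Y) C"
      by (rule commR[OF dY nY _ _ _ _ h]; (rule dR)?; (simp add: AA[symmetric]; fail)?)
    then show "derE neg (pl K Y) C" by blast
  qed
next
  case (ejoinR2 Y A2 A1)
  show ?case
  proof (intro impI allI)
    fix K C assume AA: "Join A1 A2 = A" and dR: "derE neg (pl K (fa A)) C"
    have dY: "derE neg Y A" unfolding AA[symmetric] by (rule derE.ejoinR2[OF \<open>derE neg Y A2\<close> \<open>ok neg Y (Join A1 A2)\<close>])
    have nY: "neg \<Longrightarrow> nem Y" using derE_nem[OF dY] .
    have h: "derE neg (pl E Y) D"
      if "A = Join A1' A2'" "derE neg (pl E (fa A1')) D" "derE neg (pl E (fa A2')) D" for E A1' A2' D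
      using IHf[OF _ \<open>derE neg Y A2\<close>, of E D] that AA by auto
    have "\<forall>K'. pl K (fa A) = pl K' (fa A) \<longrightarrow> derE neg (pl K' Y) C"
      by (rule commR[OF dY nY _ _ _ _ h]; (rule dR)?; (simp add: AA[symmetric]; fail)?)
    then show "derE neg (pl K Y) C" by blast
  qed
next
  case (emeetR Y A1 A2)
  show ?case
  proof (intro impI allI)
    fix K C assume AA: "Meet A1 A2 = A" and dR: "derE neg (pl K (fa A)) C"
    have dY: "derE neg Y A" unfolding AA[symmetric] by (rule derE.emeetR[OF \<open>derE neg Y A1\<close> \<open>derE neg Y A2\<close> \<open>ok neg Y (Meet A1 A2)\<close>])
    have nY: "neg \<Longrightarrow> nem Y" using derE_nem[OF dY] .
    have h1: "derE neg (pl E Y) D"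
      if "A = Meet A1' A2'" "derE neg (pl E (fa A1')) D" for E A1' A2' D
      using IHf[OF _ \<open>derE neg Y A1\<close>, of E D] that AA by auto
    have h2: "derE neg (pl E Y) D"
      if "A = Meet A1' A2'" "derE neg (pl E (fa A2')) D" for E A1' A2' D
      using IHf[OF _ \<open>derE neg Y A2\<close>, of E D] that AA by auto
    have "\<forall>K'. pl K (fa A) = pl K' (fa A) \<longrightarrow> derE neg (pl K' Y) C"
      by (rule commR[OF dY nY _ _ _ _ _ h1 h2]; (rule dR)?; (simp add: AA[symmetric]; fail)?)
    then show "derE neg (pl K Y) C" by blast
  qed
next
  case (eboxR Y A1)
  show ?case
  proof (intro impI allI)
    fix K C assume AA: "Box A1 = A" and dR: "derE neg (pl K (fa A)) C"
    have dY: "derE neg Y A" unfolding AA[symmetric] by (rule derE.eboxR[OF \<open>derE neg (Meta {#} [Br Y]) A1\<close> \<open>ok neg Y (Box A1)\<close>])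
    have nY: "neg \<Longrightarrow> nem Y" using derE_nem[OF dY] .
    have h: "derE neg (pl E (Meta {#} [Br Y])) D"
      if "A = Box B1" "derE neg (pl E (fa B1)) D" for E B1 D
      using IHf[OF _ \<open>derE neg (Meta {#} [Br Y]) A1\<close>, of E D] that AA by auto
    have "\<forall>K'. pl K (fa A) = pl K' (fa A) \<longrightarrow> derE neg (pl K' Y) C"
      by (rule commR[OF dY nY _ _ _ _ _ _ _ h]; (rule dR)?; (simp add: AA[symmetric]; fail)?)
    then show "derE neg (pl K Y) C" by blast
  qed
next
  case (ediamR Y A1)
  show ?case
  proof (intro impI allI)
    fix K C assume AA: "Diam A1 = A" and dR: "derE neg (pl K (fa A)) C"
    have dY: "derE neg (Meta {#} [Br Y]) A" unfolding AA[symmetric] by (rule derE.ediamR[OF \<open>derE neg Y A1\<close> \<open>ok neg (Meta {#} [Br Y]) (Diam A1)\<close>])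
    have nY: "neg \<Longrightarrow> nem (Meta {#} [Br Y])" using derE_nem[OF dY] .
    have h: "derE neg (pl E (Meta {#} [Br Y])) D"
      if "A = Diam B1" "derE neg (pl E (Meta {#} [Br (fa B1)])) D" for E B1 D
    proof -
      have "derE neg (pl (comp E (EI {#} [] (EH {#} [] []) [])) (fa A1)) D" using that AA by auto
      from IHf[OF _ \<open>derE neg Y A1\<close> this] AA show ?thesis by auto
    qed
    have "\<forall>K'. pl K (fa A) = pl K' (fa A) \<longrightarrow> derE neg (pl K' (Meta {#} [Br Y])) C"
      by (rule commR[OF dY nY _ _ _ _ _ _ _ _ h]; (rule dR)?; (simp add: AA[symmetric]; fail)?)
    then show "derE neg (pl K (Meta {#} [Br Y])) C" by blast
  qed
next
  case (ebangR A0 B1)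
  show ?case
  proof (intro impI allI)
    fix K C assume AA: "Bang B1 = A" and dR: "derE neg (pl K (fa A)) C"
    have dY: "derE neg (Meta {#A0#} []) A" unfolding AA[symmetric] by (rule derE.ebangR[OF \<open>derE neg (Meta {#A0#} []) B1\<close> \<open>ok neg (Meta {#A0#} []) (Bang B1)\<close>])
    have nY: "neg \<Longrightarrow> nem (Meta {#A0#} [])" using derE_nem[OF dY] .
    have h: "derE neg (pl E (Meta {#A0#} [])) D"
      if "A = Bang B2" "derE neg (pl E (Meta {#B2#} [])) D" for E B2 D
    proof -
      have eq: "B2 = B1" using that AA by auto
      have cutB: "\<And>Y K C. derE neg Y B1 \<Longrightarrow> derE neg (pl K (fa B1)) C \<Longrightarrow> derE neg (pl K Y) C"
      proof -
        fix Y K C assume "derE neg Y B1" "derE neg (pl K (fa B1)) C"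
        moreover have "size B1 < size A" using AA by auto
        ultimately show "derE neg (pl K Y) C" using IHf by blast
      qed
      have "repz B1 A0 {#B1#} {#A0#}" unfolding repz_def
        by (rule exI[of _ "{#}"], rule exI[of _ 1]) simp
      then have "repm B1 A0 (Meta {#B1#} []) (Meta {#A0#} [])" by (auto intro: rm)
      then have "repm B1 A0 (pl E (Meta {#B1#} [])) (pl E (Meta {#A0#} []))" by (rule rep_pl2[OF repE_refl])
      then show ?thesis using stoup[OF cutB \<open>derE neg (Meta {#A0#} []) B1\<close>] that(2) eq by blast
    qed
    have "\<forall>K'. pl K (fa A) = pl K' (fa A) \<longrightarrow> derE neg (pl K' (Meta {#A0#} [])) C"
      by (rule commR[OF dY nY _ _ _ _ _ _ _ _ _ h]; (rule dR)?; (simp add: AA[symmetric]; fail)?)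
    then show "derE neg (pl K (Meta {#A0#} [])) C" by blast
  qed
qed

lemma cut_all: "derE neg Y A \<Longrightarrow> derE neg (pl K (fa A)) C \<Longrightarrow> derE neg (pl K Y) C"
proof (induction A arbitrary: Y K C rule: measure_induct_rule[of size])
  case (less A)
  show ?case using cutA[of A neg Y A] less by blast
qed

theorem theorem1:
  fixes neg :: bool and xi zeta :: "frm multiset" and Pi G1 G2 :: "tree list"
    and A C :: frm and X :: ctx
  assumes "der neg (Meta xi Pi) A"
      and "der neg (fill X (Meta zeta (G1 @ [Frm A] @ G2))) C"
  shows "der neg (fill X (Meta (xi + zeta) (G1 @ Pi @ G2))) C"
proof -
  have d1: "derE neg (Meta xi Pi) A" using der_derE[OF assms(1)] .
  have "derE neg (pl (toE X zeta G1 G2) (fa A)) C" using der_derE[OF assms(2)] by (simp add: pl_toE)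
  from cut_all[OF d1 this] have "derE neg (pl (toE X zeta G1 G2) (Meta xi Pi)) C" .
  then have "der neg (pl (toE X zeta G1 G2) (Meta xi Pi)) C" by (rule derE_der)
  then show ?thesis by (simp add: pl_toE ac_simps)
qed

end
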